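(* Let $X$ be a topological graph. The following statements are equivalent: (1) $X$ is homeomorphic to the unit circle $\mathbb{S}^1$; (2) $P_h(X)=\{0,1,2,\ldots\}\cup\{+\infty\}$; (3) $0\in P_h(X)$; (4) all vertices of $X$ have degree $2$.
   Context: A topological graph is a compact connected metric space $X$ which is a finite union of arcs (spaces homeomorphic to $[0,1]$; the points corresponding to $0,1$ are the end points) such that any two of these arcs intersect in at most their end points; the vertices of $X$ are the end points of these arcs (edges), and the degree of a vertex is the number of edges having it as an end point. $\mathbb{S}^1=\{e^{2\pi i\theta}:\theta\in[0,1]\}$. For a topological space $A$, $Homeo(A)$ denotes the group of all homeomorphisms $A\to A$ under composition. For a subgroup $G$ of $Homeo(A)$ (acting by $gx=g(x)$), a nonempty subset $Y\subseteq A$ is invariant if $g(y)\in Y$ for all $g\in G$, $y\in Y$. The height of $(G,A)$ is $h(G,A)=\sup\{n\geq 0:$ there exist distinct closed invariant subsets $Y_0\subset Y_1\subset\cdots\subset Y_n=A\}$ (possibly $+\infty$). Finally $P_h(A)=\{h(G,A): G \text{ is a subgroup of } Homeo(A)\}$. *)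

theory Defs
  imports "HOL-Analysis.Analysis" "HOL-Library.Extended_Nat"
begin

definition ends :: "(real \<Rightarrow> 'a::topological_space) \<Rightarrow> 'a set" where
  "ends e = {pathstart e, pathfinish e}"

definition topological_graph :: "'a::metric_space set \<Rightarrow> (real \<Rightarrow> 'a) set \<Rightarrow> bool" where
  "topological_graph X E \<longleftrightarrow>
     compact X \<and> connected X \<and> finite E \<and> E \<noteq> {} \<and> (\<forall>e\<in>E. arc e) \<and>
     X = (\<Union>e\<in>E. path_image e) \<and>
     (\<forall>e1\<in>E. \<forall>e2\<in>E. e1 \<noteq> e2 \<longrightarrow>
         path_image e1 \<inter> path_image e2 \<subseteq> ends e1 \<inter> ends e2)"

definition graph_vertices :: "(real \<Rightarrow> 'a::topological_space) set \<Rightarrow> 'a set" where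
  "graph_vertices E = (\<Union>e\<in>E. ends e)"

definition graph_degree :: "(real \<Rightarrow> 'a::topological_space) set \<Rightarrow> 'a \<Rightarrow> nat" where
  "graph_degree E v = card {e\<in>E. v \<in> ends e}"

definition Homeo :: "'a::topological_space set \<Rightarrow> ('a \<Rightarrow> 'a) set" where
  "Homeo A = {f. (\<exists>g. homeomorphism A A f g) \<and> (\<forall>x. x \<notin> A \<longrightarrow> f x = x)}"

definition homeo_subgroup :: "('a::topological_space \<Rightarrow> 'a) set \<Rightarrow> 'a set \<Rightarrow> bool" where
  "homeo_subgroup G A \<longleftrightarrow> G \<subseteq> Homeo A \<and> id \<in> G \<and>
     (\<forall>f\<in>G. \<forall>g\<in>G. f \<circ> g \<in> G) \<and>
     (\<forall>f\<in>G. \<exists>h\<in>G. \<forall>x\<in>A. h (f x) = x)"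

definition invariant :: "('a \<Rightarrow> 'a) set \<Rightarrow> 'a set \<Rightarrow> 'a set \<Rightarrow> bool" where
  "invariant G A Y \<longleftrightarrow> Y \<noteq> {} \<and> Y \<subseteq> A \<and> (\<forall>g\<in>G. \<forall>y\<in>Y. g y \<in> Y)"

definition closed_invariant :: "('a::topological_space \<Rightarrow> 'a) set \<Rightarrow> 'a set \<Rightarrow> 'a set \<Rightarrow> bool" where
  "closed_invariant G A Y \<longleftrightarrow> invariant G A Y \<and> closedin (top_of_set A) Y"

definition height :: "('a::topological_space \<Rightarrow> 'a) set \<Rightarrow> 'a set \<Rightarrow> enat" where
  "height G A = Sup {enat n | n. \<exists>Y :: nat \<Rightarrow> 'a set.
      (\<forall>i\<le>n. closed_invariant G A (Y i)) \<and> (\<forall>i<n. Y i \<subset> Y (Suc i)) \<and> Y n = A}"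

definition P_h :: "'a::topological_space set \<Rightarrow> enat set" where
  "P_h A = {height G A | G. homeo_subgroup G A}"

end

theory Submission
  imports Defs
begin

lemma Homeo_D:
  assumes "f \<in> Homeo A"
  obtains g where "homeomorphism A A f g" "\<And>x. x \<notin> A \<Longrightarrow> f x = x"
  using assms unfolding Homeo_def by blast

lemma Homeo_image: "f \<in> Homeo A \<Longrightarrow> f ` A = A"
  by (metis Homeo_D homeomorphism_image1)

lemma Homeo_mem: "f \<in> Homeo A \<Longrightarrow> x \<in> A \<Longrightarrow> f x \<in> A"
  using Homeo_image by blast

lemma Homeo_id: "id \<in> Homeo A"
  unfolding Homeo_def id_def using homeomorphism_ident by fastforce

lemma Homeo_comp: "f \<in> Homeo A \<Longrightarrow> g \<in> Homeo A \<Longrightarrow> f \<circ> g \<in> Homeo A"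
proof -
  assume f: "f \<in> Homeo A" and g: "g \<in> Homeo A"
  obtain f' where f': "homeomorphism A A f f'" "\<And>x. x \<notin> A \<Longrightarrow> f x = x" using Homeo_D[OF f] by blast
  obtain g' where g': "homeomorphism A A g g'" "\<And>x. x \<notin> A \<Longrightarrow> g x = x" using Homeo_D[OF g] by blast
  have "homeomorphism A A (f \<circ> g) (g' \<circ> f')" using homeomorphism_compose[OF g'(1) f'(1)] .
  then show ?thesis unfolding Homeo_def using f'(2) g'(2) by auto
qed

lemma Homeo_inv:
  assumes "f \<in> Homeo A"
  obtains g where "g \<in> Homeo A" "\<And>x. x \<in> A \<Longrightarrow> g (f x) = x" "\<And>x. x \<in> A \<Longrightarrow> f (g x) = x"
proof -
  obtain f' where f': "homeomorphism A A f f'" "\<And>x. x \<notin> A \<Longrightarrow> f x = x" using Homeo_D[OF assms] by blast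
  define g where "g = (\<lambda>x. if x \<in> A then f' x else x)"
  have "homeomorphism A A g f"
    by (rule homeomorphism_cong[OF homeomorphism_symD[OF f'(1)]]) (auto simp: g_def)
  then have "g \<in> Homeo A" unfolding Homeo_def by (auto simp: g_def)
  moreover have "\<And>x. x \<in> A \<Longrightarrow> g (f x) = x" "\<And>x. x \<in> A \<Longrightarrow> f (g x) = x"
    using f'(1) unfolding homeomorphism_def g_def by auto
  ultimately show ?thesis using that by blast
qed

definition Stab :: "'a::topological_space set \<Rightarrow> 'a set set \<Rightarrow> ('a \<Rightarrow> 'a) set" where
  "Stab A S = {f \<in> Homeo A. \<forall>T\<in>S. f ` T = T}"

lemma Stab_subgroup:
  assumes "\<And>T. T \<in> S \<Longrightarrow> T \<subseteq> A"
  shows "homeo_subgroup (Stab A S) A"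
  unfolding homeo_subgroup_def
proof (intro conjI ballI)
  show "Stab A S \<subseteq> Homeo A" unfolding Stab_def by auto
  show "id \<in> Stab A S" unfolding Stab_def using Homeo_id by auto
next
  fix f g assume "f \<in> Stab A S" "g \<in> Stab A S"
  then show "f \<circ> g \<in> Stab A S" unfolding Stab_def using Homeo_comp by (auto simp del: o_apply simp add: image_comp[symmetric])
next
  fix f assume f: "f \<in> Stab A S"
  then have fH: "f \<in> Homeo A" unfolding Stab_def by auto
  obtain g where g: "g \<in> Homeo A" "\<And>x. x \<in> A \<Longrightarrow> g (f x) = x" using Homeo_inv[OF fH] by blast
  have "g ` T = T" if "T \<in> S" for T
  proof -
    have "f ` T = T" using f that unfolding Stab_def by auto
    then have "g ` T = g ` f ` T" by simp
    also have "\<dots> = T" using g(2) assms[OF that] by (force simp: image_comp)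
    finally show ?thesis .
  qed
  then have "g \<in> Stab A S" using g(1) unfolding Stab_def by auto
  then show "\<exists>h\<in>Stab A S. \<forall>x\<in>A. h (f x) = x" using g(2) by blast
qed

lemma Stab_invariant:
  assumes "Y \<noteq> {}" "Y \<subseteq> A" "\<And>y. y \<in> Y \<Longrightarrow> \<exists>T\<in>S. y \<in> T \<and> T \<subseteq> Y"
  shows "invariant (Stab A S) A Y"
  unfolding invariant_def
proof (intro conjI ballI)
  fix g y assume g: "g \<in> Stab A S" and y: "y \<in> Y"
  obtain T where T: "T \<in> S" "y \<in> T" "T \<subseteq> Y" using assms(3)[OF y] by blast
  have "g ` T = T" using g T unfolding Stab_def by auto
  then show "g y \<in> Y" using T by blast
qed (use assms in auto)

lemma height_ge:
  assumes "\<forall>i\<le>n. closed_invariant G A (Y i)" "\<forall>i<n. Y i \<subset> Y (Suc i)" "Y n = A"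
  shows "enat n \<le> height G A"
  unfolding height_def by (rule Sup_upper) (use assms in blast)

lemma height_le:
  assumes G: "homeo_subgroup G A" and R: "finite R" "R \<subseteq> A"
    and orb: "\<And>a. a \<in> A \<Longrightarrow> \<exists>r\<in>R. \<exists>g\<in>G. g r = a"
  shows "height G A \<le> enat (card R - 1)"
  unfolding height_def
proof (rule Sup_least)
  fix x assume "x \<in> {enat n | n. \<exists>Y :: nat \<Rightarrow> 'a set.
      (\<forall>i\<le>n. closed_invariant G A (Y i)) \<and> (\<forall>i<n. Y i \<subset> Y (Suc i)) \<and> Y n = A}"
  then obtain n Y where x: "x = enat n" and ci: "\<forall>i\<le>n. closed_invariant G A (Y i)" and ch: "\<forall>i<n. Y i \<subset> Y (Suc i)"
    and Yn: "Y n = A" by blast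
  have key: "R \<inter> Y i \<noteq> {}" if "i \<le> n" for i
  proof -
    have inv: "invariant G A (Y i)" using ci that closed_invariant_def by blast
    then obtain a where a: "a \<in> Y i" "a \<in> A" unfolding invariant_def by blast
    obtain r g where rg: "r \<in> R" "g \<in> G" "g r = a" using orb[OF a(2)] by blast
    obtain h where h: "h \<in> G" "\<forall>x\<in>A. h (g x) = x" using G rg(2) unfolding homeo_subgroup_def by blast
    have "h a = r" using h rg R by auto
    then have "r \<in> Y i" using inv h a unfolding invariant_def by metis
    then show ?thesis using rg by blast
  qed
  have step: "R \<inter> Y i \<subset> R \<inter> Y (Suc i)" if "i < n" for i
  proof -
    have sub: "Y i \<subset> Y (Suc i)" using ch that by blast
    then obtain a where a: "a \<in> Y (Suc i)" "a \<notin> Y i" by blast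
    have inv1: "invariant G A (Y (Suc i))" "invariant G A (Y i)"
      using ci that unfolding closed_invariant_def by auto
    then have aA: "a \<in> A" using a unfolding invariant_def by blast
    obtain r g where rg: "r \<in> R" "g \<in> G" "g r = a" using orb[OF aA] by blast
    obtain h where h: "h \<in> G" "\<forall>x\<in>A. h (g x) = x" using G rg(2) unfolding homeo_subgroup_def by blast
    have "h a = r" using h rg R by auto
    then have "r \<in> Y (Suc i)" using inv1 h a unfolding invariant_def by metis
    moreover have "r \<notin> Y i" using inv1(2) rg a unfolding invariant_def by metis
    ultimately show ?thesis using sub rg by blast
  qed
  have "i + 1 \<le> card (R \<inter> Y i)" if "i \<le> n" for i
    using that
  proof (induction i)
    case 0
    then show ?case using key[of 0] R by (simp add: card_gt_0_iff Suc_leI)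
  next
    case (Suc i)
    then have "card (R \<inter> Y i) < card (R \<inter> Y (Suc i))"
      using step[of i] R by (intro psubset_card_mono) auto
    then show ?case using Suc by simp
  qed
  then have "n + 1 \<le> card (R \<inter> Y n)" by simp
  also have "\<dots> \<le> card R" using R by (simp add: card_mono)
  finally show "x \<le> enat (card R - 1)" using x by simp
qed

definition cj :: "('a \<Rightarrow> 'b) \<Rightarrow> ('b \<Rightarrow> 'a) \<Rightarrow> 'a set \<Rightarrow> ('b \<Rightarrow> 'b) \<Rightarrow> ('a \<Rightarrow> 'a)" where
  "cj \<phi> \<psi> X f = (\<lambda>x. if x \<in> X then \<psi> (f (\<phi> x)) else x)"

lemma hom_back: "homeomorphism X S \<phi> \<psi> \<Longrightarrow> A \<subseteq> X \<Longrightarrow> \<psi> ` \<phi> ` A = A"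
  unfolding homeomorphism_def by (force simp: image_comp)

lemma cj_Homeo:
  assumes hom: "homeomorphism X S \<phi> \<psi>" and f: "f \<in> Homeo S"
  shows "cj \<phi> \<psi> X f \<in> Homeo X"
proof -
  obtain f' where f': "homeomorphism S S f f'" using Homeo_D[OF f] by blast
  have "homeomorphism X X (\<psi> \<circ> (f \<circ> \<phi>)) ((\<phi>' \<circ> f') \<circ> \<phi>)" if "\<phi>' = \<psi>" for \<phi>'
    using homeomorphism_compose[OF homeomorphism_compose[OF hom f'] homeomorphism_symD[OF hom]] that
    by (simp add: comp_assoc)
  then have "homeomorphism X X (cj \<phi> \<psi> X f) (cj \<phi> \<psi> X f')"
    by (rule homeomorphism_cong[OF _ refl refl]) (auto simp: cj_def)
  then show ?thesis unfolding Homeo_def cj_def by auto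
qed

lemma transfer_height:
  assumes hom: "homeomorphism X S \<phi> \<psi>" and G: "homeo_subgroup G S"
  shows "\<exists>G'. homeo_subgroup G' X \<and> height G' X = height G S"
proof -
  let ?c = "cj \<phi> \<psi> X"
  define G' where "G' = ?c ` G"
  have GH: "G \<subseteq> Homeo S" using G unfolding homeo_subgroup_def by blast
  have phiX: "\<And>x. x \<in> X \<Longrightarrow> \<phi> x \<in> S" and psiS: "\<And>y. y \<in> S \<Longrightarrow> \<psi> y \<in> X"
    and pp1: "\<And>x. x \<in> X \<Longrightarrow> \<psi> (\<phi> x) = x" and pp2: "\<And>y. y \<in> S \<Longrightarrow> \<phi> (\<psi> y) = y"
    using hom unfolding homeomorphism_def by auto
  have fS: "f y \<in> S" if "f \<in> G" "y \<in> S" for f y using GH that Homeo_mem by blast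
  have sub: "homeo_subgroup G' X"
    unfolding homeo_subgroup_def
  proof (intro conjI ballI)
    show "G' \<subseteq> Homeo X" unfolding G'_def using cj_Homeo[OF hom] GH by blast
    have "?c id = id" by (rule ext) (simp add: cj_def pp1)
    moreover have "id \<in> G" using G unfolding homeo_subgroup_def by blast
    ultimately show "id \<in> G'" unfolding G'_def by (metis image_eqI)
  next
    fix f g assume "f \<in> G'" "g \<in> G'"
    then obtain f0 g0 where fg: "f0 \<in> G" "g0 \<in> G" "f = ?c f0" "g = ?c g0" unfolding G'_def by blast
    have "f \<circ> g = ?c (f0 \<circ> g0)"
    proof (rule ext)
      fix x show "(f \<circ> g) x = ?c (f0 \<circ> g0) x"
        using fg by (cases "x \<in> X") (simp_all add: cj_def psiS fS pp2 phiX)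
    qed
    moreover have "f0 \<circ> g0 \<in> G" using G fg unfolding homeo_subgroup_def by blast
    ultimately show "f \<circ> g \<in> G'" unfolding G'_def by blast
  next
    fix f assume "f \<in> G'"
    then obtain f0 where f0: "f0 \<in> G" "f = ?c f0" unfolding G'_def by blast
    obtain h0 where h0: "h0 \<in> G" "\<forall>x\<in>S. h0 (f0 x) = x" using G f0 unfolding homeo_subgroup_def by blast
    have "\<forall>x\<in>X. ?c h0 (f x) = x" using f0 h0 by (simp add: cj_def psiS fS pp2 phiX pp1)
    then show "\<exists>h\<in>G'. \<forall>x\<in>X. h (f x) = x" using h0 unfolding G'_def by blast
  qed
  have ci1: "closed_invariant G S (\<phi> ` Y)" if "closed_invariant G' X Y" for Y
  proof -
    have Y: "Y \<noteq> {}" "Y \<subseteq> X" "closedin (top_of_set X) Y" "\<forall>g\<in>G'. \<forall>y\<in>Y. g y \<in> Y"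
      using that unfolding closed_invariant_def invariant_def by auto
    have "\<forall>f\<in>G. \<forall>z\<in>\<phi> ` Y. f z \<in> \<phi> ` Y"
    proof (intro ballI)
      fix f z assume f: "f \<in> G" and z: "z \<in> \<phi> ` Y"
      then obtain y where y: "y \<in> Y" "z = \<phi> y" by blast
      have "?c f y \<in> Y" using Y(4) f y unfolding G'_def by blast
      then have "\<psi> (f z) \<in> Y" using y Y(2) by (auto simp: cj_def)
      moreover have "\<phi> (\<psi> (f z)) = f z" using pp2 fS f y phiX Y(2) by blast
      ultimately show "f z \<in> \<phi> ` Y" by (metis image_eqI)
    qed
    then show ?thesis unfolding closed_invariant_def invariant_def
      using Y homeomorphism_imp_closed_map[OF hom Y(3)] phiX by blast
  qed
  have ci2: "closed_invariant G' X (\<psi> ` Z)" if "closed_invariant G S Z" for Z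
  proof -
    have Z: "Z \<noteq> {}" "Z \<subseteq> S" "closedin (top_of_set S) Z" "\<forall>g\<in>G. \<forall>y\<in>Z. g y \<in> Z"
      using that unfolding closed_invariant_def invariant_def by auto
    have "\<forall>f\<in>G'. \<forall>z\<in>\<psi> ` Z. f z \<in> \<psi> ` Z"
    proof (intro ballI)
      fix f z assume f: "f \<in> G'" and z: "z \<in> \<psi> ` Z"
      then obtain y f0 where y: "y \<in> Z" "z = \<psi> y" "f0 \<in> G" "f = ?c f0" unfolding G'_def by blast
      have "f z = \<psi> (f0 y)" using y Z(2) psiS pp2 by (auto simp: cj_def)
      then show "f z \<in> \<psi> ` Z" using Z(4) y by blast
    qed
    then show ?thesis unfolding closed_invariant_def invariant_def
      using Z homeomorphism_imp_closed_map[OF homeomorphism_symD[OF hom] Z(3)] psiS by blast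
  qed
  have ciX: "Y \<subseteq> X" if "closed_invariant G' X Y" for Y
    using that unfolding closed_invariant_def invariant_def by auto
  have ciS: "Z \<subseteq> S" if "closed_invariant G S Z" for Z
    using that unfolding closed_invariant_def invariant_def by auto
  have "{enat n | n. \<exists>Y :: nat \<Rightarrow> 'a set.
      (\<forall>i\<le>n. closed_invariant G' X (Y i)) \<and> (\<forall>i<n. Y i \<subset> Y (Suc i)) \<and> Y n = X}
    = {enat n | n. \<exists>Y :: nat \<Rightarrow> 'b set.
      (\<forall>i\<le>n. closed_invariant G S (Y i)) \<and> (\<forall>i<n. Y i \<subset> Y (Suc i)) \<and> Y n = S}"
  proof (intro antisym subsetI)
    fix x assume "x \<in> {enat n | n. \<exists>Y :: nat \<Rightarrow> 'a set.
      (\<forall>i\<le>n. closed_invariant G' X (Y i)) \<and> (\<forall>i<n. Y i \<subset> Y (Suc i)) \<and> Y n = X}"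
    then obtain n Y where x: "x = enat n" and Y: "\<forall>i\<le>n. closed_invariant G' X (Y i)"
      "\<forall>i<n. Y i \<subset> Y (Suc i)" "Y n = X" by blast
    have "\<forall>i\<le>n. closed_invariant G S (\<phi> ` Y i)" using Y ci1 by blast
    moreover have "\<forall>i<n. \<phi> ` Y i \<subset> \<phi> ` Y (Suc i)"
    proof (intro allI impI)
      fix i assume i: "i < n"
      then have s: "Y i \<subset> Y (Suc i)" "Y (Suc i) \<subseteq> X" using Y ciX by auto
      have "\<phi> ` Y i \<noteq> \<phi> ` Y (Suc i)"
      proof
        assume eq: "\<phi> ` Y i = \<phi> ` Y (Suc i)"
        have "Y i = \<psi> ` \<phi> ` Y i" using hom_back[OF hom, of "Y i"] s by blast
        also have "\<dots> = \<psi> ` \<phi> ` Y (Suc i)" by (simp only: eq)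
        also have "\<dots> = Y (Suc i)" using hom_back[OF hom, of "Y (Suc i)"] s by blast
        finally show False using s by blast
      qed
      then show "\<phi> ` Y i \<subset> \<phi> ` Y (Suc i)" using s by blast
    qed
    moreover have "\<phi> ` Y n = S" using Y(3) hom unfolding homeomorphism_def by blast
    ultimately have "\<exists>Z :: nat \<Rightarrow> 'b set.
      (\<forall>i\<le>n. closed_invariant G S (Z i)) \<and> (\<forall>i<n. Z i \<subset> Z (Suc i)) \<and> Z n = S"
      by (intro exI[of _ "\<lambda>i. \<phi> ` Y i"]) simp
    then show "x \<in> {enat n | n. \<exists>Y :: nat \<Rightarrow> 'b set.
      (\<forall>i\<le>n. closed_invariant G S (Y i)) \<and> (\<forall>i<n. Y i \<subset> Y (Suc i)) \<and> Y n = S}"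
      unfolding x by blast
  next
    fix x assume "x \<in> {enat n | n. \<exists>Y :: nat \<Rightarrow> 'b set.
      (\<forall>i\<le>n. closed_invariant G S (Y i)) \<and> (\<forall>i<n. Y i \<subset> Y (Suc i)) \<and> Y n = S}"
    then obtain n Y where x: "x = enat n" and Y: "\<forall>i\<le>n. closed_invariant G S (Y i)"
      "\<forall>i<n. Y i \<subset> Y (Suc i)" "Y n = S" by blast
    have "\<forall>i\<le>n. closed_invariant G' X (\<psi> ` Y i)" using Y ci2 by blast
    moreover have "\<forall>i<n. \<psi> ` Y i \<subset> \<psi> ` Y (Suc i)"
    proof (intro allI impI)
      fix i assume i: "i < n"
      then have s: "Y i \<subset> Y (Suc i)" "Y (Suc i) \<subseteq> S" using Y ciS by auto
      have "\<psi> ` Y i \<noteq> \<psi> ` Y (Suc i)"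
      proof
        assume eq: "\<psi> ` Y i = \<psi> ` Y (Suc i)"
        have "Y i = \<phi> ` \<psi> ` Y i" using hom_back[OF homeomorphism_symD[OF hom], of "Y i"] s by blast
        also have "\<dots> = \<phi> ` \<psi> ` Y (Suc i)" by (simp only: eq)
        also have "\<dots> = Y (Suc i)" using hom_back[OF homeomorphism_symD[OF hom], of "Y (Suc i)"] s by blast
        finally show False using s by blast
      qed
      then show "\<psi> ` Y i \<subset> \<psi> ` Y (Suc i)" using s by blast
    qed
    moreover have "\<psi> ` Y n = X" using Y(3) hom unfolding homeomorphism_def by blast
    ultimately have "\<exists>Z :: nat \<Rightarrow> 'a set.
      (\<forall>i\<le>n. closed_invariant G' X (Z i)) \<and> (\<forall>i<n. Z i \<subset> Z (Suc i)) \<and> Z n = X"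
      by (intro exI[of _ "\<lambda>i. \<psi> ` Y i"]) simp
    then show "x \<in> {enat n | n. \<exists>Y :: nat \<Rightarrow> 'a set.
      (\<forall>i\<le>n. closed_invariant G' X (Y i)) \<and> (\<forall>i<n. Y i \<subset> Y (Suc i)) \<and> Y n = X}"
      unfolding x by blast
  qed
  then have "height G' X = height G S" unfolding height_def by simp
  then show ?thesis using sub by blast
qed

lemma P_h_transfer:
  assumes "homeomorphism X S \<phi> \<psi>"
  shows "P_h S \<subseteq> P_h X"
  unfolding P_h_def
proof (rule subsetI)
  fix h assume "h \<in> {height G S |G. homeo_subgroup G S}"
  then obtain G where G: "homeo_subgroup G S" "h = height G S" by blast
  obtain G' where "homeo_subgroup G' X" "height G' X = height G S" using transfer_height[OF assms G(1)] by blast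
  then show "h \<in> {height G X |G. homeo_subgroup G X}" using G(2) by (metis (mono_tags, lifting) mem_Collect_eq)
qed

definition pp :: "real \<Rightarrow> complex" where "pp t = exp (\<i> * of_real (2 * pi * t))"

lemma pp_sphere: "pp t \<in> sphere 0 1"
  by (simp add: pp_def)

lemma pp_cont: "continuous_on A pp"
  unfolding pp_def by (intro continuous_intros)

lemma pp_eq_int: "pp s = pp t \<Longrightarrow> \<exists>n::int. s = t + n"
proof -
  assume "pp s = pp t"
  then obtain n :: int where "\<i> * of_real (2 * pi * s) = \<i> * of_real (2 * pi * t) + (of_int (2 * n) * pi) * \<i>"
    unfolding pp_def exp_eq by blast
  then have "Im (\<i> * of_real (2 * pi * s)) = Im (\<i> * of_real (2 * pi * t) + (of_int (2 * n) * pi) * \<i>)"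
    by simp
  then have "2 * pi * s = 2 * pi * t + 2 * n * pi" by simp
  then have "2 * pi * s = 2 * pi * (t + n)" by (simp add: algebra_simps)
  then have "s = t + n" using pi_gt_zero by simp
  then show ?thesis by blast
qed

lemma pp_inj: "pp s = pp t \<Longrightarrow> \<bar>s - t\<bar> < 1 \<Longrightarrow> s = t"
proof -
  assume "pp s = pp t" "\<bar>s - t\<bar> < 1"
  then obtain n :: int where n: "s = t + n" "\<bar>s - t\<bar> < 1" using pp_eq_int by blast
  then have "\<bar>real_of_int n\<bar> < 1" by simp
  then have "n = 0" by linarith
  then show ?thesis using n by simp
qed

lemma pp_PI: "pp s = pp t \<Longrightarrow> s \<in> {0..1} \<Longrightarrow> t \<in> {0<..<1} \<Longrightarrow> s = t"
  by (rule pp_inj) auto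

lemma pp_periodic: "pp (t + 1) = pp t"
proof -
  have "\<i> * of_real (2 * pi * (t + 1)) = \<i> * of_real (2 * pi * t) + 2 * pi * \<i>"
    by (simp add: algebra_simps)
  then show ?thesis unfolding pp_def by (simp add: exp_add)
qed

lemma pp_0: "pp 0 = 1" by (simp add: pp_def)
lemma pp_1: "pp 1 = 1" using pp_periodic[of 0] pp_0 by simp

lemma pp_cnj: "cnj (pp t) = pp (1 - t)"
proof -
  have "cnj (pp t) = pp (- t)" unfolding pp_def by (simp add: exp_cnj)
  also have "\<dots> = pp (1 - t)" using pp_periodic[of "-t"] by simp
  finally show ?thesis .
qed

lemma pp_surj: "z \<in> sphere 0 1 \<Longrightarrow> \<exists>t\<in>{0..<1}. z = pp t"
proof -
  assume z: "z \<in> sphere 0 1"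
  have A: "0 \<le> Arg2pi z" "Arg2pi z < 2 * pi" "z = of_real (norm z) * exp (\<i> * of_real (Arg2pi z))"
    using Arg2pi[of z] unfolding is_Arg_def by auto
  define t where "t = Arg2pi z / (2 * pi)"
  have "t \<in> {0..<1}" using A by (simp add: t_def field_simps)
  moreover have "z = pp t" using A z by (simp add: pp_def t_def)
  ultimately show ?thesis by blast
qed

lemma pp_image01: "pp ` {0..1} = sphere 0 1"
  using pp_surj pp_sphere by fastforce

lemma compact_pp_image: "compact A \<Longrightarrow> compact (pp ` A)"
  by (rule compact_continuous_image[OF pp_cont])

lemma image_one_minus: "(\<lambda>s::real. 1 - s) ` {c..d} = {1 - d..1 - c}"
proof (intro antisym subsetI)
  fix y assume "y \<in> {1 - d..1 - c}"
  then show "y \<in> (\<lambda>s::real. 1 - s) ` {c..d}" by (intro image_eqI[of _ _ "1 - y"]) auto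
qed auto

definition pl :: "real \<Rightarrow> real \<Rightarrow> real \<Rightarrow> real" where
  "pl x y s = (if s \<le> x then s * (y / x) else y + (s - x) * ((1 - y) / (1 - x)))"

lemma pl_cont: "0 < x \<Longrightarrow> x < 1 \<Longrightarrow> continuous_on A (pl x y)"
  unfolding pl_def
  by (rule continuous_on_cases_le[where h = "\<lambda>s. s", OF _ _ continuous_on_id])
     (auto intro!: continuous_intros)

lemma pl_simps: "0 < x \<Longrightarrow> x < 1 \<Longrightarrow> pl x y 0 = 0 \<and> pl x y 1 = 1 \<and> pl x y x = y"
  by (simp add: pl_def)

lemma pl_range: "0 < x \<Longrightarrow> x < 1 \<Longrightarrow> 0 < y \<Longrightarrow> y < 1 \<Longrightarrow> s \<in> {0..1} \<Longrightarrow> pl x y s \<in> {0..1}"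
proof -
  assume a: "0 < x" "x < 1" "0 < y" "y < 1" "s \<in> {0..1}"
  show ?thesis
  proof (cases "s \<le> x")
    case True
    have "s / x \<le> 1" "0 \<le> s / x" using True a by auto
    then have "(s / x) * y \<le> y" "0 \<le> (s / x) * y" using a by (intro mult_left_le_one_le mult_nonneg_nonneg; simp)+
    moreover have v: "pl x y s = (s / x) * y" using True by (simp add: pl_def)
    ultimately show ?thesis unfolding v atLeastAtMost_iff using a by linarith
  next
    case False
    have "(s - x) / (1 - x) \<le> 1" "0 \<le> (s - x) / (1 - x)" using False a by auto
    then have "((s - x) / (1 - x)) * (1 - y) \<le> 1 - y" "0 \<le> ((s - x) / (1 - x)) * (1 - y)"
      using a by (intro mult_left_le_one_le mult_nonneg_nonneg; simp)+
    moreover have "(s - x) * ((1 - y) / (1 - x)) = ((s - x) / (1 - x)) * (1 - y)" by simp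
    ultimately show ?thesis using False a by (simp add: pl_def)
  qed
qed

lemma pl_inv: "0 < x \<Longrightarrow> x < 1 \<Longrightarrow> 0 < y \<Longrightarrow> y < 1 \<Longrightarrow> pl y x (pl x y s) = s"
proof (cases "s \<le> x")
  case True
  assume a: "0 < x" "x < 1" "0 < y" "y < 1"
  have "s * (y / x) \<le> y" using True a by (simp add: field_simps mult_right_mono)
  then show ?thesis using True a by (simp add: pl_def)
next
  case False
  assume a: "0 < x" "x < 1" "0 < y" "y < 1"
  define v where "v = y + (s - x) * ((1 - y) / (1 - x))"
  have "(s - x) * ((1 - y) / (1 - x)) > 0" using False a by simp
  then have gt: "\<not> v \<le> y" by (simp add: v_def)
  have c: "((1 - y) / (1 - x)) * ((1 - x) / (1 - y)) = 1" using a by simp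
  have eq: "(s - x) * ((1 - y) / (1 - x)) * ((1 - x) / (1 - y)) = s - x" by (metis c mult.assoc mult.right_neutral)
  have "pl x y s = v" using False by (simp add: pl_def v_def)
  moreover have "pl y x v = x + (v - y) * ((1 - x) / (1 - y))" using gt by (simp add: pl_def)
  moreover have "v - y = (s - x) * ((1 - y) / (1 - x))" by (simp add: v_def)
  moreover have "x + (s - x) * ((1 - y) / (1 - x)) * ((1 - x) / (1 - y)) = s" unfolding eq by simp
  ultimately show ?thesis by simp
qed

lemma homeomorphismI2:
  assumes "continuous_on Y f" "continuous_on Y g" "\<And>z. z \<in> Y \<Longrightarrow> f z \<in> Y" "\<And>z. z \<in> Y \<Longrightarrow> g z \<in> Y"
    "\<And>z. z \<in> Y \<Longrightarrow> g (f z) = z" "\<And>z. z \<in> Y \<Longrightarrow> f (g z) = z"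
  shows "homeomorphism Y Y f g"
proof -
  have "f ` Y = Y" "g ` Y = Y" using assms by (auto, metis image_eqI)+
  then show ?thesis unfolding homeomorphism_def using assms by auto
qed

lemma arc_bump:
  fixes \<gamma> :: "real \<Rightarrow> 'a::metric_space"
  assumes arc: "arc \<gamma>" and C: "closed C" and Y: "Y = path_image \<gamma> \<union> C"
    and int: "path_image \<gamma> \<inter> C \<subseteq> {pathstart \<gamma>, pathfinish \<gamma>}"
    and x: "0 < x" "x < 1" and y: "0 < y" "y < 1"
  shows "\<exists>f\<in>Homeo Y. f (\<gamma> x) = \<gamma> y \<and> (\<forall>z\<in>Y. z \<notin> \<gamma> ` {0<..<1} \<longrightarrow> f z = z)
           \<and> f ` path_image \<gamma> = path_image \<gamma>"
proof -
  let ?A = "path_image \<gamma>"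
  obtain \<gamma>i where h: "homeomorphism {0..1} ?A \<gamma> \<gamma>i" using homeomorphism_arc[OF arc] by blast
  have h1: "\<And>s. s \<in> {0..1} \<Longrightarrow> \<gamma>i (\<gamma> s) = s" and h2: "\<And>z. z \<in> ?A \<Longrightarrow> \<gamma> (\<gamma>i z) = z"
    and h3: "\<And>z. z \<in> ?A \<Longrightarrow> \<gamma>i z \<in> {0..1}" and h4: "\<And>s. s \<in> {0..1} \<Longrightarrow> \<gamma> s \<in> ?A"
    using h unfolding homeomorphism_def by auto
  have contg: "continuous_on {0..1} \<gamma>" and contgi: "continuous_on ?A \<gamma>i"
    using h unfolding homeomorphism_def by auto
  define f where "f = (\<lambda>z. if z \<in> ?A then \<gamma> (pl x y (\<gamma>i z)) else z)"
  define g where "g = (\<lambda>z. if z \<in> ?A then \<gamma> (pl y x (\<gamma>i z)) else z)"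
  have closedA: "closed ?A" using arc by (simp add: arc_imp_path closed_path_image)
  have fA: "f z \<in> ?A" "g z \<in> ?A" if "z \<in> ?A" for z
    using that h3 h4 pl_range x y by (auto simp: f_def g_def)
  have fC: "f z = z" "g z = z" if "z \<in> C" for z
  proof -
    have "f z = z \<and> g z = z"
    proof (cases "z \<in> ?A")
      case True
      then have "z = \<gamma> 0 \<or> z = \<gamma> 1" using int that by (auto simp: pathstart_def pathfinish_def)
      then show ?thesis using h1 pl_simps x y by (auto simp: f_def g_def)
    qed (auto simp: f_def g_def)
    then show "f z = z" "g z = z" by auto
  qed
  have cont: "continuous_on Y k" if "k = f \<or> k = g" for k
  proof -
    have "continuous_on ?A (\<lambda>z. \<gamma> (pl x y (\<gamma>i z)))" "continuous_on ?A (\<lambda>z. \<gamma> (pl y x (\<gamma>i z)))"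
      by (intro continuous_on_compose2[OF contg] continuous_on_compose2[OF pl_cont[where A=UNIV] contgi];
          use x y h3 pl_range in auto)+
    then have "continuous_on ?A f" "continuous_on ?A g" by (auto simp: f_def g_def elim!: continuous_on_eq)
    then have "continuous_on ?A k" using that by auto
    moreover have "continuous_on C k" using that fC by (auto intro: continuous_on_eq[OF continuous_on_id])
    ultimately show ?thesis unfolding Y by (intro continuous_on_closed_Un closedA C)
  qed
  have inv: "g (f z) = z" "f (g z) = z" if "z \<in> Y" for z
  proof -
    have "g (f z) = z \<and> f (g z) = z"
    proof (cases "z \<in> ?A")
      case True
      then show ?thesis using fA h1 h2 h3 pl_range pl_inv x y by (simp add: f_def g_def)
    qed (auto simp: f_def g_def)
    then show "g (f z) = z" "f (g z) = z" by auto
  qed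
  have mapY: "f z \<in> Y" "g z \<in> Y" if "z \<in> Y" for z
    using that fA by (auto simp: f_def g_def Y)
  have hom: "homeomorphism Y Y f g"
    by (rule homeomorphismI2) (use cont mapY inv in auto)
  have "f \<in> Homeo Y" unfolding Homeo_def using hom by (auto simp: f_def Y)
  moreover have "f (\<gamma> x) = \<gamma> y" using x y h1 h4 pl_simps by (simp add: f_def)
  moreover have "\<forall>z\<in>Y. z \<notin> \<gamma> ` {0<..<1} \<longrightarrow> f z = z"
  proof (intro ballI impI)
    fix z assume z: "z \<in> Y" "z \<notin> \<gamma> ` {0<..<1}"
    show "f z = z"
    proof (cases "z \<in> ?A")
      case True
      then have "\<gamma>i z \<notin> {0<..<1}" using z h2 by (metis image_eqI)
      then have "\<gamma>i z = 0 \<or> \<gamma>i z = 1" using h3[OF True] by auto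
      then have "f z = \<gamma> (\<gamma>i z)" using True pl_simps x by (auto simp: f_def)
      then show ?thesis using h2 True by simp
    qed (auto simp: f_def)
  qed
  moreover have "f ` ?A = ?A"
  proof (intro antisym subsetI)
    fix z assume "z \<in> ?A"
    then have "z = f (g z)" "g z \<in> ?A" using inv fA unfolding Y by auto
    then show "z \<in> f ` ?A" by blast
  qed (use fA in auto)
  ultimately show ?thesis by blast
qed

lemma lin_image:
  fixes a b :: real assumes "a < b"
  shows "(\<lambda>s. a + s * (b - a)) ` {0..1} = {a..b}" "(\<lambda>s. a + s * (b - a)) ` {0<..<1} = {a<..<b}"
proof -
  have e: "t = a + ((t - a) / (b - a)) * (b - a)" for t using assms by (simp add: field_simps)
  show "(\<lambda>s. a + s * (b - a)) ` {0..1} = {a..b}"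
  proof (intro antisym subsetI)
    fix t assume "t \<in> {a..b}"
    then show "t \<in> (\<lambda>s. a + s * (b - a)) ` {0..1}"
      using assms by (intro image_eqI[where x="(t - a) / (b - a)"]) (auto simp: field_simps)
  next
    fix t assume "t \<in> (\<lambda>s. a + s * (b - a)) ` {0..1}"
    then obtain s where s: "s \<in> {0..1}" "t = a + s * (b - a)" by blast
    have h1: "s * (b - a) \<le> 1 * (b - a)" using s assms by (intro mult_right_mono) auto
    have h2: "0 \<le> s * (b - a)" using s assms by simp
    show "t \<in> {a..b}" unfolding atLeastAtMost_iff using h1 h2 s(2) by simp
  qed
  show "(\<lambda>s. a + s * (b - a)) ` {0<..<1} = {a<..<b}"
  proof (intro antisym subsetI)
    fix t assume "t \<in> {a<..<b}"
    then show "t \<in> (\<lambda>s. a + s * (b - a)) ` {0<..<1}"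
      using assms by (intro image_eqI[where x="(t - a) / (b - a)"]) (auto simp: field_simps)
  next
    fix t assume "t \<in> (\<lambda>s. a + s * (b - a)) ` {0<..<1}"
    then obtain s where s: "s \<in> {0<..<1}" "t = a + s * (b - a)" by blast
    have h1: "s * (b - a) < 1 * (b - a)" using s assms by (intro mult_strict_right_mono) auto
    have h2: "0 < s * (b - a)" using s assms by simp
    show "t \<in> {a<..<b}" using h1 h2 s(2) by simp
  qed
qed

lemma circle_bump:
  assumes ab: "0 \<le> a" "a < x" "x < b" "a < y" "y < b" "b \<le> 1" "b - a < 1"
  shows "\<exists>f\<in>Homeo (sphere 0 1). f (pp x) = pp y \<and> (\<forall>z\<in>sphere 0 1. z \<notin> pp ` {a<..<b} \<longrightarrow> f z = z)
           \<and> f ` (pp ` {a..b}) = pp ` {a..b}"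
proof -
  have ab': "a < b" using ab by simp
  define \<gamma> where "\<gamma> = (\<lambda>s. pp (a + s * (b - a)))"
  have pim: "path_image \<gamma> = pp ` {a..b}"
    unfolding path_image_def \<gamma>_def using lin_image[OF ab'] by (metis image_image)
  have oim: "\<gamma> ` {0<..<1} = pp ` {a<..<b}"
    unfolding \<gamma>_def using lin_image[OF ab'] by (metis image_image)
  have "path \<gamma>" unfolding path_def \<gamma>_def
    by (intro continuous_on_compose2[OF pp_cont[of UNIV]] continuous_intros) auto
  moreover have "inj_on \<gamma> {0..1}"
  proof (rule inj_onI)
    fix s s' assume s: "s \<in> {0..1}" "s' \<in> {0..1}" "\<gamma> s = \<gamma> s'"
    have "\<bar>(a + s * (b - a)) - (a + s' * (b - a))\<bar> = \<bar>s - s'\<bar> * (b - a)"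
      using ab' by (simp add: abs_mult left_diff_distrib[symmetric])
    also have "\<dots> \<le> 1 * (b - a)" using s ab' by (intro mult_right_mono) auto
    finally have "\<bar>(a + s * (b - a)) - (a + s' * (b - a))\<bar> < 1" using ab by simp
    then have "a + s * (b - a) = a + s' * (b - a)" using pp_inj s(3) unfolding \<gamma>_def by blast
    then show "s = s'" using ab' by simp
  qed
  ultimately have arc: "arc \<gamma>" unfolding arc_def by blast
  define C where "C = pp ` ({0..a} \<union> {b..1})"
  have C: "closed C" unfolding C_def by (intro compact_imp_closed compact_pp_image) auto
  have Y: "sphere 0 1 = path_image \<gamma> \<union> C"
  proof -
    have "{0..1} = {0..a} \<union> {a..b} \<union> {b..(1::real)}" using ab by auto
    then show ?thesis unfolding pim C_def pp_image01[symmetric] by auto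
  qed
  have int: "path_image \<gamma> \<inter> C \<subseteq> {pathstart \<gamma>, pathfinish \<gamma>}"
  proof
    fix z assume "z \<in> path_image \<gamma> \<inter> C"
    then have z: "z \<in> pp ` {a..b}" "z \<in> pp ` ({0..a} \<union> {b..1})" unfolding pim C_def by auto
    obtain s where s: "s \<in> {a..b}" "z = pp s" using z(1) by blast
    obtain t where t: "t \<in> {0..a} \<union> {b..1}" "z = pp t" using z(2) by blast
    have st: "s \<in> {a..b}" "t \<in> {0..a} \<union> {b..1}" "z = pp s" "pp t = pp s" using s t by auto
    have "s = a \<or> s = b"
    proof (rule ccontr)
      assume "\<not> (s = a \<or> s = b)"
      then have "s \<in> {0<..<1}" "a < s" "s < b" using st ab by auto
      then have "t = s" using pp_PI[OF st(4)] st ab by auto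
      then show False using st \<open>a < s\<close> \<open>s < b\<close> by auto
    qed
    then show "z \<in> {pathstart \<gamma>, pathfinish \<gamma>}" using st by (auto simp: pathstart_def pathfinish_def \<gamma>_def)
  qed
  define x' where "x' = (x - a) / (b - a)"
  define y' where "y' = (y - a) / (b - a)"
  have xy: "0 < x'" "x' < 1" "0 < y'" "y' < 1" using ab by (auto simp: x'_def y'_def field_simps)
  have gx: "\<gamma> x' = pp x" "\<gamma> y' = pp y" using ab' by (simp_all add: \<gamma>_def x'_def y'_def)
  from arc_bump[OF arc C Y int xy] show ?thesis unfolding gx oim pim by blast
qed

abbreviation "SS \<equiv> sphere (0::complex) 1"

lemma norm_pp [simp]: "cmod (pp t) = 1"
  using pp_sphere[of t] by simp

lemma closedin_SS: "closed Y \<Longrightarrow> Y \<subseteq> SS \<Longrightarrow> closedin (top_of_set SS) Y"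
  by (simp add: closed_subset)

lemma height_inf: "\<exists>G. homeo_subgroup G SS \<and> height G SS = \<infinity>"
proof -
  have G: "homeo_subgroup {id} SS" by (auto simp: homeo_subgroup_def Homeo_id)
  define q where "q = (\<lambda>k::nat. pp (1 / (real k + 2)))"
  have qS: "q k \<in> SS" for k by (simp add: q_def pp_sphere)
  have qinj: "q k = q k' \<Longrightarrow> k = k'" for k k'
  proof -
    assume "q k = q k'"
    moreover have "\<bar>1 / (real k + 2) - 1 / (real k' + 2)\<bar> < 1"
    proof -
      have "0 < 1 / (real k + 2)" "1 / (real k + 2) < 1" "0 < 1 / (real k' + 2)" "1 / (real k' + 2) < 1"
        by (auto simp: field_simps)
      then show ?thesis by linarith
    qed
    ultimately have "1 / (real k + 2) = 1 / (real k' + 2)" unfolding q_def using pp_inj by blast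
    then show "k = k'" by (simp add: field_simps)
  qed
  have ge: "enat n \<le> height {id} SS" for n
  proof -
    define Y where "Y = (\<lambda>i. if i < n then q ` {..i} else SS)"
    have "\<forall>i\<le>n. closed_invariant {id} SS (Y i)"
    proof (intro allI impI)
      fix i assume "i \<le> n"
      have sub: "Y i \<subseteq> SS" using qS by (auto simp: Y_def)
      have ne: "Y i \<noteq> {}" using qS by (auto simp: Y_def)
      have cl: "closed (Y i)" by (auto simp: Y_def intro!: finite_imp_closed)
      show "closed_invariant {id} SS (Y i)" unfolding closed_invariant_def invariant_def
        using sub ne closedin_SS[OF cl sub] by auto
    qed
    moreover have "\<forall>i<n. Y i \<subset> Y (Suc i)"
    proof (intro allI impI)
      fix i assume i: "i < n"
      have nq: "q (Suc i) \<notin> q ` {..i}" using qinj by fastforce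
      show "Y i \<subset> Y (Suc i)"
      proof (cases "Suc i < n")
        case True
        then show ?thesis using i nq by (auto simp: Y_def)
      next
        case False
        then show ?thesis using i nq qS by (auto simp: Y_def)
      qed
    qed
    moreover have "Y n = SS" by (simp add: Y_def)
    ultimately show ?thesis by (rule height_ge)
  qed
  have "height {id} SS = \<infinity>"
  proof (rule ccontr)
    assume "height {id} SS \<noteq> \<infinity>"
    then obtain m where "height {id} SS = enat m" by (cases "height {id} SS") auto
    then show False using ge[of "Suc m"] by simp
  qed
  then show ?thesis using G by blast
qed

definition rot :: "complex \<Rightarrow> complex \<Rightarrow> complex" where
  "rot a = (\<lambda>w. if w \<in> SS then a * w else w)"

lemma rot_Homeo: "a \<in> SS \<Longrightarrow> rot a \<in> Homeo SS"
proof -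
  assume a: "a \<in> SS"
  have aa: "cnj a * a = 1" "a * cnj a = 1"
    using a complex_norm_square[of a] by (simp_all add: mult.commute)
  have na: "cmod a = 1" "cmod (cnj a) = 1" using a by auto
  have m1: "w \<in> SS \<Longrightarrow> a * w \<in> SS" "w \<in> SS \<Longrightarrow> cnj a * w \<in> SS" for w
    using na by (auto simp: norm_mult)
  have "homeomorphism SS SS (rot a) (rot (cnj a))"
  proof (rule homeomorphismI2)
    have c1: "continuous_on SS (\<lambda>w. a * w)" "continuous_on SS (\<lambda>w. cnj a * w)" by (intro continuous_intros)+
    show "continuous_on SS (rot a)" by (rule continuous_on_eq[OF c1(1)]) (simp add: rot_def)
    show "continuous_on SS (rot (cnj a))" by (rule continuous_on_eq[OF c1(2)]) (simp add: rot_def)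
    fix z assume z: "z \<in> SS"
    show "rot a z \<in> SS" "rot (cnj a) z \<in> SS" using m1 z by (simp_all add: rot_def)
    have "cnj a * (a * z) = (cnj a * a) * z" "a * (cnj a * z) = (a * cnj a) * z" by (simp_all add: mult.assoc)
    then show "rot (cnj a) (rot a z) = z" "rot a (rot (cnj a) z) = z" using m1 z aa by (simp_all add: rot_def)
  qed
  then show ?thesis unfolding Homeo_def by (auto simp: rot_def)
qed

lemma height_zero: "\<exists>G. homeo_subgroup G SS \<and> height G SS = 0"
proof -
  have G: "homeo_subgroup (Stab SS {}) SS" by (rule Stab_subgroup) auto
  have "height (Stab SS {}) SS \<le> enat (card {1::complex} - 1)"
  proof (rule height_le[OF G])
    fix a assume a: "a \<in> SS"
    have "rot a \<in> Stab SS {}" using rot_Homeo[OF a] by (simp add: Stab_def)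
    moreover have "rot a 1 = a" by (simp add: rot_def)
    ultimately show "\<exists>r\<in>{1}. \<exists>g\<in>Stab SS {}. g r = a" by blast
  qed auto
  then have "height (Stab SS {}) SS \<le> 0" by (simp add: zero_enat_def)
  then have "height (Stab SS {}) SS = 0" by simp
  then show ?thesis using G by blast
qed

lemma arith_between:
  fixes N :: nat and j :: nat and c :: int
  assumes "N > 0" "real j / real N < real_of_int c / real N" "real_of_int c / real N < (real j + 1) / real N"
  shows False
proof -
  have "real j < real_of_int c" "real_of_int c < real j + 1" using assms by (simp_all add: divide_less_cancel)
  then have "int j < c" "c < int j + 1" by linarith+
  then show False by linarith
qed

lemma arith_same:
  fixes N k j :: nat and s :: real
  assumes "N > 0" "real k / real N \<le> s" "s \<le> (real k + 1) / real N"
    "real j / real N < s" "s < (real j + 1) / real N"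
  shows "k = j"
proof -
  have "real k / real N < (real j + 1) / real N" "real j / real N < (real k + 1) / real N"
    using assms by linarith+
  then have "real k < real j + 1" "real j < real k + 1" using assms(1) by (simp_all add: divide_less_cancel)
  then show ?thesis by linarith
qed

lemma one_minus_frac:
  fixes N k :: nat assumes "k < N"
  shows "1 - (real k + 1) / real N = real (N - k - 1) / real N"
    "1 - real k / real N = (real (N - k - 1) + 1) / real N"
  using assms by (auto simp: field_simps of_nat_diff)

lemma cover1:
  fixes N l :: nat and u :: real
  assumes "N > 0" "l \<ge> 1" "0 \<le> u" "u \<le> real l / real N"
  shows "\<exists>k<l. real k / real N \<le> u \<and> u \<le> (real k + 1) / real N"
proof (cases "u * real N \<ge> real l")
  case True
  then have "u = real l / real N" using assms by (simp add: field_simps)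
  moreover have l1: "real (l - 1) + 1 = real l" using assms(2) by (simp add: of_nat_diff)
  moreover have "real (l - 1) / real N \<le> real l / real N" by (simp add: divide_right_mono)
  moreover have "l - 1 < l" using assms(2) by simp
  ultimately show ?thesis by (metis order_refl)
next
  case False
  define k where "k = nat \<lfloor>u * real N\<rfloor>"
  have k: "real k = of_int \<lfloor>u * real N\<rfloor>" using assms by (simp add: k_def)
  have fl: "real k \<le> u * real N" "u * real N < real k + 1"
    using k of_int_floor_le[of "u * real N"] real_of_int_floor_add_one_gt[of "u * real N"] by linarith+
  have "k < l" using fl False by linarith
  moreover have "real k / real N \<le> u" "u \<le> (real k + 1) / real N"
    using fl assms by (auto simp: field_simps)
  ultimately show ?thesis by blast
qed

lemma mid_facts:
  fixes p q t m :: real assumes "p < min t m" "max t m < q"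
  shows "p < (p + min t m) / 2" "(p + min t m) / 2 < m" "(p + min t m) / 2 < t"
    "m < (q + max t m) / 2" "t < (q + max t m) / 2" "(q + max t m) / 2 < q"
  using assms by auto

lemma fr:
  assumes "N > (0::nat)"
  shows "x / real N < y / real N \<longleftrightarrow> x < y" "x / real N \<le> y / real N \<longleftrightarrow> x \<le> y"
    "x / real N = y / real N \<longleftrightarrow> x = y" "1 - x / real N = (real N - x) / real N"
    "0 < x / real N \<longleftrightarrow> 0 < x" "0 \<le> x / real N \<longleftrightarrow> 0 \<le> x"
    "x / real N < 1 \<longleftrightarrow> x < real N" "x / real N \<le> 1 \<longleftrightarrow> x \<le> real N"
  using assms by (auto simp: field_simps)

definition Pt :: "nat \<Rightarrow> nat \<Rightarrow> complex set" where
  "Pt N j = {pp (real j / real N), pp (1 - real j / real N)}"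
definition Ar :: "nat \<Rightarrow> nat \<Rightarrow> complex set" where
  "Ar N j = pp ` ({real j / real N..(real j + 1) / real N} \<union> {1 - (real j + 1) / real N..1 - real j / real N})"
definition Dd :: "real \<Rightarrow> complex set" where
  "Dd r = pp ` ({0..r} \<union> {1 - r..1})"
definition Fam :: "nat \<Rightarrow> complex set set" where
  "Fam N = {Pt N j | j. j < N} \<union> {Ar N j | j. j < N}"
definition GN :: "nat \<Rightarrow> (complex \<Rightarrow> complex) set" where
  "GN N = Stab SS (Fam N)"

lemma Fam_sub: "T \<in> Fam N \<Longrightarrow> T \<subseteq> SS"
  by (auto simp: Fam_def Pt_def Ar_def pp_sphere)

lemma GN_subgroup: "homeo_subgroup (GN N) SS"
  unfolding GN_def by (rule Stab_subgroup) (rule Fam_sub)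

definition cnjH :: "complex \<Rightarrow> complex" where
  "cnjH = (\<lambda>z. if z \<in> SS then cnj z else z)"

lemma cnj_pp_image: "cnj ` pp ` M = pp ` ((\<lambda>s. 1 - s) ` M)"
  by (auto simp: image_image pp_cnj)

lemma cnjH_GN: "cnjH \<in> GN N"
proof -
  have c: "continuous_on SS cnjH"
    by (rule continuous_on_eq[OF continuous_on_cnj[OF continuous_on_id]]) (simp add: cnjH_def)
  have "homeomorphism SS SS cnjH cnjH"
    by (rule homeomorphismI2[OF c c]) (auto simp: cnjH_def)
  then have H: "cnjH \<in> Homeo SS" unfolding Homeo_def by (auto simp: cnjH_def)
  have "cnjH ` T = T" if T: "T \<in> Fam N" for T
  proof -
    have "cnjH ` T = cnj ` T" using Fam_sub[OF T] by (auto simp: cnjH_def)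
    also have "\<dots> = T"
    proof -
      obtain j where "T = Pt N j \<or> T = Ar N j" using T unfolding Fam_def by blast
      then show ?thesis
      proof
        assume "T = Pt N j"
        then show ?thesis by (auto simp: Pt_def pp_cnj)
      next
        assume T: "T = Ar N j"
        have "cnj ` Ar N j = pp ` ((\<lambda>s. 1 - s) ` {real j / real N..(real j + 1) / real N} \<union>
            (\<lambda>s. 1 - s) ` {1 - (real j + 1) / real N..1 - real j / real N})"
          unfolding Ar_def cnj_pp_image image_Un ..
        also have "\<dots> = Ar N j" unfolding image_one_minus Ar_def by (simp add: Un_commute)
        finally show ?thesis using T by simp
      qed
    qed
    finally show ?thesis .
  qed
  then show ?thesis unfolding GN_def Stab_def using H by blast
qed

lemma fix_lemma:
  assumes "T \<subseteq> A" "\<forall>z\<in>A. z \<notin> U \<longrightarrow> f z = z" "f ` V = V" "U \<subseteq> V" "T \<inter> U = {} \<or> V \<subseteq> T"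
  shows "f ` T = T"
  using assms(5)
proof
  assume "T \<inter> U = {}"
  then show ?thesis using assms(1,2) by (force intro: image_eqI)
next
  assume VT: "V \<subseteq> T"
  have "f ` T = f ` (T - V) \<union> f ` V" using VT by blast
  also have "f ` (T - V) = T - V" using assms(1,2,4) by (force intro: image_eqI)
  finally show ?thesis using assms(3) VT by blast
qed

lemma bump_GN:
  fixes N j :: nat and t m :: real
  assumes N: "N > 0" and j: "j < N" and t: "real j / real N < t" "t < (real j + 1) / real N"
    and m: "real j / real N < m" "m < (real j + 1) / real N"
  shows "\<exists>f\<in>GN N. f (pp m) = pp t"
proof -
  define a where "a = (real j / real N + min t m) / 2"
  define b where "b = ((real j + 1) / real N + max t m) / 2"
  have j1: "(real j + 1) / real N \<le> 1" using j N by (simp add: field_simps)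
  have j0: "0 \<le> real j / real N" by simp
  have mm: "real j / real N < min t m" "max t m < (real j + 1) / real N"
    "min t m \<le> t" "min t m \<le> m" "t \<le> max t m" "m \<le> max t m" using t m by auto
  have ab: "real j / real N < a" "a < m" "a < t" "m < b" "t < b" "b < (real j + 1) / real N"
    unfolding a_def b_def using mid_facts[OF mm(1,2)] by auto
  have "b - a < 1 / real N"
  proof -
    have "(real j + 1) / real N - real j / real N = 1 / real N" by (simp add: diff_divide_distrib[symmetric])
    then show ?thesis using ab by linarith
  qed
  moreover have "1 / real N \<le> 1" using N by simp
  ultimately have ba: "b - a < 1" by linarith
  obtain f where f: "f \<in> Homeo SS" "f (pp m) = pp t" "\<forall>z\<in>SS. z \<notin> pp ` {a<..<b} \<longrightarrow> f z = z"
    "f ` (pp ` {a..b}) = pp ` {a..b}"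
    using circle_bump[of a m b t] ab j0 j1 ba by fastforce
  have a0: "0 < a" using ab(1) j0 by linarith
  have b1: "b < 1" using ab(6) j1 by linarith
  have ab01: "{a<..<b} \<subseteq> {0<..<1}" using a0 b1 by auto
  have memU: "s \<in> {a<..<b}" if "pp s' = pp s" "s \<in> {a<..<b}" "s' \<in> {0..1}" "s' = s \<Longrightarrow> False" for s s'
    using pp_PI[OF that(1) that(3)] ab01 that by auto
  have "f ` T = T" if T: "T \<in> Fam N" for T
  proof (rule fix_lemma[OF Fam_sub[OF T] f(3) f(4)])
    show "pp ` {a<..<b} \<subseteq> pp ` {a..b}" by auto
    obtain k where k: "k < N" "T = Pt N k \<or> T = Ar N k" using T unfolding Fam_def by blast
    show "T \<inter> pp ` {a<..<b} = {} \<or> pp ` {a..b} \<subseteq> T"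
      using k(2)
    proof
      assume T: "T = Pt N k"
      have "T \<inter> pp ` {a<..<b} = {}"
      proof (rule ccontr)
        assume "T \<inter> pp ` {a<..<b} \<noteq> {}"
        then obtain s c where s: "s \<in> {a<..<b}" "pp c = pp s" "c = real k / real N \<or> c = 1 - real k / real N"
          unfolding T Pt_def by auto
        have "real k / real N \<in> {0..1}" "1 - real k / real N \<in> {0..1}" using k(1) N by (simp_all add: fr)
        then have c01: "c \<in> {0..1}" using s(3) by auto
        have "c = s" using pp_PI[OF s(2) c01] s(1) ab01 by auto
        then have cj: "real j / real N < c" "c < (real j + 1) / real N" using s ab by auto
        show False using s(3)
        proof
          assume "c = real k / real N"
          then show False using arith_between[OF N, of j "int k"] cj by simp
        next
          assume "c = 1 - real k / real N"
          then have "c = real_of_int (int (N - k)) / real N" using k N by (simp add: field_simps of_nat_diff)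
          then show False using arith_between[OF N, of j "int (N - k)"] cj by simp
        qed
      qed
      then show ?thesis by blast
    next
      assume T: "T = Ar N k"
      show ?thesis
      proof (cases "T \<inter> pp ` {a<..<b} = {}")
        case False
        then obtain z where z: "z \<in> T" "z \<in> pp ` {a<..<b}" by blast
        obtain s0 where s0: "s0 \<in> {a<..<b}" "z = pp s0" using z(2) by blast
        obtain c0 where c0: "c0 \<in> {real k / real N..(real k + 1) / real N} \<union> {1 - (real k + 1) / real N..1 - real k / real N}"
          "z = pp c0" using z(1) unfolding T Ar_def by blast
        obtain s c where s: "s \<in> {a<..<b}" "pp c = pp s"
          "c \<in> {real k / real N..(real k + 1) / real N} \<union> {1 - (real k + 1) / real N..1 - real k / real N}"
          using s0 c0 by metis
        have f: "0 \<le> real k / real N" "(real k + 1) / real N \<le> 1" "0 \<le> 1 - (real k + 1) / real N"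
          "1 - real k / real N \<le> 1" using k(1) N by (simp_all add: fr)
        have c01: "c \<in> {0..1}" using s(3)
        proof (elim UnE)
          assume h: "c \<in> {real k / real N..(real k + 1) / real N}"
          have "0 \<le> c" "c \<le> 1" using f h[unfolded atLeastAtMost_iff] by linarith+
          then show ?thesis by simp
        next
          assume h: "c \<in> {1 - (real k + 1) / real N..1 - real k / real N}"
          have "0 \<le> c" "c \<le> 1" using f h[unfolded atLeastAtMost_iff] by linarith+
          then show ?thesis by simp
        qed
        have "c = s" using pp_PI[OF s(2) c01] s(1) ab01 by auto
        then have cj: "real j / real N < c" "c < (real j + 1) / real N" using s ab by auto
        have "pp ` {a..b} \<subseteq> pp ` {real j / real N..(real j + 1) / real N}"
          using ab by (intro image_mono) auto
        moreover have "pp ` {real j / real N..(real j + 1) / real N} \<subseteq> T"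
          using s(3)
        proof
          assume "c \<in> {real k / real N..(real k + 1) / real N}"
          then have "k = j" using arith_same[OF N, of k c j] cj by auto
          then show ?thesis unfolding T Ar_def by blast
        next
          assume "c \<in> {1 - (real k + 1) / real N..1 - real k / real N}"
          then have "c \<in> {real (N - k - 1) / real N..(real (N - k - 1) + 1) / real N}"
            using one_minus_frac[OF k(1)] by simp
          then have "N - k - 1 = j" using arith_same[OF N, of "N - k - 1" c j] cj by auto
          then have "{1 - (real k + 1) / real N..1 - real k / real N} = {real j / real N..(real j + 1) / real N}"
            using one_minus_frac[OF k(1)] by simp
          then show ?thesis unfolding T Ar_def by blast
        qed
        ultimately show ?thesis by blast
      qed blast
    qed
  qed
  then have "f \<in> GN N" using f(1) unfolding GN_def Stab_def by blast
  then show ?thesis using f(2) by blast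
qed

definition RR :: "nat \<Rightarrow> complex set" where
  "RR N = (\<lambda>i. pp (real i / (2 * real N))) ` {..N}"

lemma card_RR: "N > 0 \<Longrightarrow> card (RR N) = N + 1"
proof -
  assume N: "N > 0"
  have "inj_on (\<lambda>i. pp (real i / (2 * real N))) {..N}"
  proof (rule inj_onI)
    fix i i' assume ii: "i \<in> {..N}" "i' \<in> {..N}" "pp (real i / (2 * real N)) = pp (real i' / (2 * real N))"
    have b: "0 \<le> real i / (2 * real N)" "real i / (2 * real N) \<le> 1/2"
      "0 \<le> real i' / (2 * real N)" "real i' / (2 * real N) \<le> 1/2"
      using ii N by (auto simp: field_simps)
    then have "\<bar>real i / (2 * real N) - real i' / (2 * real N)\<bar> < 1" by linarith
    then have "real i / (2 * real N) = real i' / (2 * real N)" using pp_inj ii(3) by blast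
    then show "i = i'" using N by (simp add: field_simps)
  qed
  then show ?thesis unfolding RR_def by (simp add: card_image)
qed

lemma RR_sub: "RR N \<subseteq> SS" by (auto simp: RR_def pp_sphere)

lemma GN_orbits:
  assumes N: "N > 0" and z: "z \<in> SS"
  shows "\<exists>r\<in>RR N. \<exists>g\<in>GN N. g r = z"
proof -
  have G: "homeo_subgroup (GN N) SS" by (rule GN_subgroup)
  have idG: "id \<in> GN N" using G unfolding homeo_subgroup_def by blast
  have half: "\<exists>r\<in>RR N. \<exists>g\<in>GN N. g r = pp u" if u: "0 \<le> u" "u \<le> 1/2" for u
  proof -
    define j where "j = nat \<lfloor>u * real N\<rfloor>"
    have k: "real j = of_int \<lfloor>u * real N\<rfloor>" using u by (simp add: j_def)
    have fl: "real j \<le> u * real N" "u * real N < real j + 1"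
      using k of_int_floor_le[of "u * real N"] real_of_int_floor_add_one_gt[of "u * real N"] by linarith+
    have uN: "u * real N \<le> real N / 2" using u N by (simp add: field_simps)
    show ?thesis
    proof (cases "u * real N = real j")
      case True
      have "real (2 * j) \<le> real N" using True uN by simp
      then have jN: "2 * j \<le> N" by linarith
      have "u = real j / real N" using True N by (simp add: field_simps)
      then have "pp (real (2 * j) / (2 * real N)) = pp u" using N by simp
      moreover have "pp (real (2 * j) / (2 * real N)) \<in> RR N" using jN unfolding RR_def by blast
      ultimately show ?thesis using idG by (metis id_apply)
    next
      case False
      then have lt: "real j < u * real N" using fl by simp
      then have "real (2 * j) < real N" using uN by simp
      then have jN: "2 * j + 1 \<le> N" by linarith
      have t: "real j / real N < u" "u < (real j + 1) / real N" using lt fl N by (auto simp: field_simps)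
      have m: "real j / real N < real (2 * j + 1) / (2 * real N)" "real (2 * j + 1) / (2 * real N) < (real j + 1) / real N"
        using N by (auto simp: field_simps)
      obtain g where "g \<in> GN N" "g (pp (real (2 * j + 1) / (2 * real N))) = pp u"
        using bump_GN[OF N _ t m] jN by auto
      moreover have "pp (real (2 * j + 1) / (2 * real N)) \<in> RR N" using jN unfolding RR_def by blast
      ultimately show ?thesis by blast
    qed
  qed
  obtain t where t: "t \<in> {0..<1}" "z = pp t" using pp_surj[OF z] by blast
  show ?thesis
  proof (cases "t \<le> 1/2")
    case True
    then show ?thesis using half[of t] t by auto
  next
    case False
    obtain r g where rg: "r \<in> RR N" "g \<in> GN N" "g r = pp (1 - t)" using half[of "1 - t"] False t by auto
    have "cnjH \<circ> g \<in> GN N" using G cnjH_GN rg(2) unfolding homeo_subgroup_def by blast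
    moreover have "(cnjH \<circ> g) r = z" using rg t by (simp add: cnjH_def pp_sphere pp_cnj)
    ultimately show ?thesis using rg(1) by blast
  qed
qed

definition YN :: "nat \<Rightarrow> nat \<Rightarrow> complex set" where
  "YN N i = (if i < N then Dd (real (i div 2) / real N) \<union> Pt N ((i + 1) div 2) else SS)"

lemma Dd_sub: "Dd r \<subseteq> SS" by (auto simp: Dd_def pp_sphere)
lemma Pt_sub: "Pt N k \<subseteq> SS" by (auto simp: Pt_def pp_sphere)

lemma Pt_in_Dd: "Pt N l \<subseteq> Dd (real l / real N)"
  by (auto simp: Pt_def Dd_def)

lemma Dd_mono: "0 \<le> r \<Longrightarrow> r \<le> r' \<Longrightarrow> Dd r \<subseteq> Dd r'"
  unfolding Dd_def by (intro image_mono) auto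

lemma YN_ci:
  assumes N: "N > 0" and i: "i \<le> N"
  shows "closed_invariant (GN N) SS (YN N i)"
proof -
  have sub: "YN N i \<subseteq> SS" using Dd_sub Pt_sub by (auto simp: YN_def)
  have ne: "YN N i \<noteq> {}" by (auto simp: YN_def Pt_def)
  have cD: "closed (Dd r)" for r unfolding Dd_def by (intro compact_imp_closed compact_pp_image) auto
  have cP: "closed (Pt N k)" for k unfolding Pt_def by (rule finite_imp_closed) auto
  have cl: "closed (YN N i)" unfolding YN_def using cD cP by auto
  have inv: "invariant (GN N) SS (YN N i)"
    unfolding GN_def
  proof (rule Stab_invariant[OF ne sub])
    fix y assume y: "y \<in> YN N i"
    show "\<exists>T\<in>Fam N. y \<in> T \<and> T \<subseteq> YN N i"
    proof (cases "i < N")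
      case False
      then have ySS: "y \<in> SS" and Y: "YN N i = SS" using y by (auto simp: YN_def)
      obtain t where t: "t \<in> {0..<1}" "y = pp t" using pp_surj[OF ySS] by blast
      obtain k where k: "k < N" "real k / real N \<le> t" "t \<le> (real k + 1) / real N"
        using cover1[OF N _ _, of N t] t N by auto
      have "y \<in> Ar N k" using k t unfolding Ar_def by auto
      moreover have "Ar N k \<in> Fam N" using k unfolding Fam_def by blast
      ultimately show ?thesis using Y Fam_sub by blast
    next
      case True
      define l where "l = i div 2"
      define p where "p = (i + 1) div 2"
      have Y: "YN N i = Dd (real l / real N) \<union> Pt N p" using True by (simp add: YN_def l_def p_def)
      have pN: "p < N" using True N unfolding p_def by linarith
      have lN: "l < N" using True N unfolding l_def by linarith
      show ?thesis
      proof (cases "y \<in> Pt N p")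
        case True
        then show ?thesis using pN Y unfolding Fam_def by blast
      next
        case False
        then have yD: "y \<in> Dd (real l / real N)" using y Y by blast
        then obtain t where t: "t \<in> {0..real l / real N} \<union> {1 - real l / real N..1}" "y = pp t"
          unfolding Dd_def by blast
        show ?thesis
        proof (cases "l = 0")
          case True
          then have "y = pp 0" using t pp_0 pp_1 by auto
          moreover have "Pt N 0 \<subseteq> YN N i" using Y True Pt_in_Dd[of N 0] by auto
          moreover have "Pt N 0 \<in> Fam N" using N unfolding Fam_def by blast
          ultimately show ?thesis by (auto simp: Pt_def)
        next
          case False
          then have l1: "l \<ge> 1" by simp
          obtain k where k: "k < l" "t \<in> {real k / real N..(real k + 1) / real N} \<union> {1 - (real k + 1) / real N..1 - real k / real N}"
          proof (cases "t \<le> real l / real N")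
            case True
            have "real l / real N \<le> 1" using lN N by (simp add: fr)
            then have "0 \<le> t" using t by auto
            then obtain k where "k < l" "real k / real N \<le> t" "t \<le> (real k + 1) / real N"
              using cover1[OF N l1, of t] True by auto
            then show ?thesis using that by auto
          next
            case False
            then have "0 \<le> 1 - t" "1 - t \<le> real l / real N" using t by auto
            then obtain k where "k < l" "real k / real N \<le> 1 - t" "1 - t \<le> (real k + 1) / real N"
              using cover1[OF N l1, of "1 - t"] by auto
            then show ?thesis using that by auto
          qed
          have "y \<in> Ar N k" using k t unfolding Ar_def by auto
          moreover have "Ar N k \<in> Fam N" using k lN unfolding Fam_def by auto
          moreover have "Ar N k \<subseteq> Dd (real l / real N)"
          proof -
            have h: "(real k + 1) / real N \<le> real l / real N" using k N by (simp add: divide_right_mono)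
            have f1: "0 \<le> real k / real N" by simp
            have f2: "1 - real l / real N \<le> 1 - (real k + 1) / real N" using h by linarith
            have f3: "1 - real k / real N \<le> 1" by simp
            show ?thesis unfolding Ar_def Dd_def
              by (intro image_mono Un_mono) (use f1 f2 f3 h in auto)
          qed
          ultimately show ?thesis using Y by blast
        qed
      qed
    qed
  qed
  show ?thesis unfolding closed_invariant_def using inv closedin_SS[OF cl sub] by blast
qed

lemma notin_lemma:
  assumes "s \<in> {0<..<1}" "0 \<le> r" "r < s" "s < 1 - r" "k \<le> N" "N > 0"
    "s \<noteq> real k / real N" "s \<noteq> 1 - real k / real N"
  shows "pp s \<notin> Dd r \<union> Pt N k"
proof
  assume "pp s \<in> Dd r \<union> Pt N k"
  then obtain c where c: "pp c = pp s" "c \<in> {0..r} \<union> {1 - r..1} \<or> c = real k / real N \<or> c = 1 - real k / real N"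
    unfolding Dd_def Pt_def by auto
  have "real k \<le> real N" using assms by simp
  then have "real k / real N \<le> 1" using assms(6) by (simp add: divide_le_eq_1)
  moreover have "0 \<le> real k / real N" by simp
  moreover have "r \<le> 1" using assms by simp
  ultimately have "c \<in> {0..1}" using c(2) assms(2) by auto
  then have "c = s" using pp_PI[OF c(1)] assms(1) by blast
  then show False using c(2) assms by auto
qed

lemma YN_strict:
  assumes N: "N > 0" and i: "i < N"
  shows "YN N i \<subset> YN N (Suc i)"
proof (cases "even i")
  case True
  define l where "l = i div 2"
  have il: "i = 2 * l" using True by (simp add: l_def)
  have Yi: "YN N i = Dd (real l / real N) \<union> Pt N l" using i il by (simp add: YN_def)
  show ?thesis
  proof (cases "Suc i < N")
    case True
    have lN: "2 * real l + 1 < real N" using True il by linarith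
    have Ys: "YN N (Suc i) = Dd (real l / real N) \<union> Pt N (l + 1)" using True il by (simp add: YN_def)
    have w: "pp (real (l + 1) / real N) \<in> YN N (Suc i)" unfolding Ys Pt_def by blast
    have "pp (real (l + 1) / real N) \<notin> Dd (real l / real N) \<union> Pt N l"
      by (rule notin_lemma) (use lN N in \<open>simp_all add: fr\<close>)
    then show ?thesis using w Ys Yi Pt_in_Dd by blast
  next
    case False
    then have NN: "2 * real l < real N" using i il by simp
    have Ys: "YN N (Suc i) = SS" using False by (simp add: YN_def)
    have h: "(1::real) / 2 = (real N / 2) / real N" using N by simp
    have "pp ((real N / 2) / real N) \<notin> Dd (real l / real N) \<union> Pt N l"
      by (rule notin_lemma) (use NN N in \<open>simp_all add: fr\<close>)
    then show ?thesis using Ys Yi Dd_sub Pt_sub pp_sphere by blast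
  qed
next
  case False
  define l where "l = i div 2"
  have il: "i = 2 * l + 1" using False by (simp add: l_def)
  have Yi: "YN N i = Dd (real l / real N) \<union> Pt N (l + 1)" using i il by (simp add: YN_def)
  define s where "s = (real l + 1 / 2) / real N"
  have lN: "2 * real l + 1 < real N \<or> real N = 2 * real l + 2" using i il by linarith
  have par: "real N \<noteq> 2 * real l + 3 / 2"
  proof
    assume "real N = 2 * real l + 3 / 2"
    then have "real (2 * N) = real (4 * l + 3)" by simp
    then have "2 * N = 4 * l + 3" by linarith
    then show False by presburger
  qed
  have ns: "pp s \<notin> Dd (real l / real N) \<union> Pt N (l + 1)"
    unfolding s_def by (rule notin_lemma) (use lN N i il par in \<open>simp_all add: fr\<close>)
  show ?thesis
  proof (cases "Suc i < N")
    case True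
    have Ys: "YN N (Suc i) = Dd ((1 + real l) / real N) \<union> Pt N (l + 1)" using True il by (simp add: YN_def)
    have "Dd (real l / real N) \<subseteq> Dd ((1 + real l) / real N)" by (rule Dd_mono) (use N in \<open>simp_all add: fr\<close>)
    moreover have "pp s \<in> Dd ((1 + real l) / real N)" unfolding Dd_def using N by (auto simp: s_def fr)
    ultimately show ?thesis using Ys Yi ns by blast
  next
    case False
    have Ys: "YN N (Suc i) = SS" using False by (simp add: YN_def)
    then show ?thesis using Ys Yi ns Dd_sub Pt_sub pp_sphere by blast
  qed
qed

lemma height_GN: "N > 0 \<Longrightarrow> height (GN N) SS = enat N"
proof (rule antisym)
  assume N: "N > 0"
  have "height (GN N) SS \<le> enat (card (RR N) - 1)"
    by (rule height_le[OF GN_subgroup]) (use RR_sub GN_orbits[OF N] in \<open>auto simp: RR_def\<close>)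
  then show "height (GN N) SS \<le> enat N" using card_RR[OF N] by simp
  have "\<forall>i\<le>N. closed_invariant (GN N) SS (YN N i)" using YN_ci[OF N] by blast
  moreover have "\<forall>i<N. YN N i \<subset> YN N (Suc i)" using YN_strict[OF N] by blast
  moreover have "YN N N = SS" by (simp add: YN_def)
  ultimately show "enat N \<le> height (GN N) SS" by (rule height_ge)
qed

lemma circle_all: "\<exists>G. homeo_subgroup G SS \<and> height G SS = h"
proof (cases h)
  case (enat n)
  then show ?thesis
  proof (cases n)
    case 0
    then show ?thesis using height_zero enat by (simp add: zero_enat_def)
  next
    case (Suc m)
    then show ?thesis using height_GN[of n] GN_subgroup enat by auto
  qed
next
  case infinity
  then show ?thesis using height_inf by simp
qed

lemma P_h_circle:
  assumes "X homeomorphic SS"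
  shows "P_h X = range enat \<union> {\<infinity>}"
proof -
  obtain \<phi> \<psi> where h: "homeomorphism X SS \<phi> \<psi>" using assms unfolding homeomorphic_def by blast
  have "x \<in> P_h SS" for x
  proof -
    obtain G where "homeo_subgroup G SS" "height G SS = x" using circle_all by blast
    then show ?thesis unfolding P_h_def by (metis (mono_tags, lifting) mem_Collect_eq)
  qed
  then have "P_h SS = UNIV" by auto
  then have "P_h X = UNIV" using P_h_transfer[OF h] by auto
  moreover have "range enat \<union> {\<infinity>} = (UNIV :: enat set)"
  proof (rule set_eqI)
    fix x :: enat show "x \<in> range enat \<union> {\<infinity>} \<longleftrightarrow> x \<in> UNIV" by (cases x) auto
  qed
  ultimately show ?thesis by simp
qed

definition arc_from :: "'a::metric_space set \<Rightarrow> 'a \<Rightarrow> (real \<Rightarrow> 'a) \<Rightarrow> bool" where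
  "arc_from X x \<gamma> \<longleftrightarrow> arc \<gamma> \<and> pathstart \<gamma> = x \<and> path_image \<gamma> \<subseteq> X"

definition triod :: "'a::metric_space set \<Rightarrow> 'a \<Rightarrow> bool" where
  "triod X x \<longleftrightarrow> (\<exists>\<gamma>1 \<gamma>2 \<gamma>3. arc_from X x \<gamma>1 \<and> arc_from X x \<gamma>2 \<and> arc_from X x \<gamma>3 \<and>
     path_image \<gamma>1 \<inter> path_image \<gamma>2 = {x} \<and> path_image \<gamma>1 \<inter> path_image \<gamma>3 = {x} \<and>
     path_image \<gamma>2 \<inter> path_image \<gamma>3 = {x})"

definition twoarc :: "'a::metric_space set \<Rightarrow> 'a \<Rightarrow> bool" where
  "twoarc X x \<longleftrightarrow> (\<exists>\<gamma>1 \<gamma>2. arc_from X x \<gamma>1 \<and> arc_from X x \<gamma>2 \<and> path_image \<gamma>1 \<inter> path_image \<gamma>2 = {x})"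

definition Bad :: "'a::metric_space set \<Rightarrow> 'a set" where
  "Bad X = {x \<in> X. triod X x \<or> \<not> twoarc X x}"

lemma arc_from_hom:
  assumes h: "homeomorphism X X f g" and a: "arc_from X x \<gamma>"
  shows "arc_from X (f x) (f \<circ> \<gamma>)" "path_image (f \<circ> \<gamma>) = f ` path_image \<gamma>"
proof -
  have sub: "path_image \<gamma> \<subseteq> X" and arc: "arc \<gamma>" and st: "pathstart \<gamma> = x"
    using a unfolding arc_from_def by auto
  have cf: "continuous_on X f" and injf: "inj_on f X" and fX: "f ` X = X"
    using h unfolding homeomorphism_def by (auto intro: inj_on_inverseI)
  have "path (f \<circ> \<gamma>)" unfolding path_def
    using arc_imp_path[OF arc] sub cf unfolding path_def path_image_def
    by (intro continuous_on_compose) (auto intro: continuous_on_subset)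
  moreover have "inj_on (f \<circ> \<gamma>) {0..1}"
    using arc_imp_inj_on[OF arc] injf sub unfolding path_image_def
    by (intro comp_inj_on) (auto intro: inj_on_subset)
  ultimately have "arc (f \<circ> \<gamma>)" unfolding arc_def by blast
  moreover show pim: "path_image (f \<circ> \<gamma>) = f ` path_image \<gamma>" by (simp add: path_image_compose)
  ultimately show "arc_from X (f x) (f \<circ> \<gamma>)" unfolding arc_from_def
    using st sub fX by (auto simp: pathstart_def)
qed

lemma inj_image_Int:
  assumes "inj_on f X" "A \<subseteq> X" "B \<subseteq> X"
  shows "f ` A \<inter> f ` B = f ` (A \<inter> B)"
  using assms unfolding inj_on_def by blast

lemma triod_hom:
  assumes h: "homeomorphism X X f g" and x: "x \<in> X" and t: "triod X x"
  shows "triod X (f x)"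
proof -
  obtain \<gamma>1 \<gamma>2 \<gamma>3 where g: "arc_from X x \<gamma>1" "arc_from X x \<gamma>2" "arc_from X x \<gamma>3"
     "path_image \<gamma>1 \<inter> path_image \<gamma>2 = {x}" "path_image \<gamma>1 \<inter> path_image \<gamma>3 = {x}"
     "path_image \<gamma>2 \<inter> path_image \<gamma>3 = {x}" using t unfolding triod_def by blast
  have injf: "inj_on f X" using h unfolding homeomorphism_def by (auto intro: inj_on_inverseI)
  have sub: "path_image \<gamma>1 \<subseteq> X" "path_image \<gamma>2 \<subseteq> X" "path_image \<gamma>3 \<subseteq> X"
    using g unfolding arc_from_def by auto
  show ?thesis unfolding triod_def
    apply (rule exI[of _ "f \<circ> \<gamma>1"], rule exI[of _ "f \<circ> \<gamma>2"], rule exI[of _ "f \<circ> \<gamma>3"])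
    using arc_from_hom[OF h g(1)] arc_from_hom[OF h g(2)] arc_from_hom[OF h g(3)]
      inj_image_Int[OF injf sub(1) sub(2)] inj_image_Int[OF injf sub(1) sub(3)] inj_image_Int[OF injf sub(2) sub(3)] g(4-6)
    by simp
qed

lemma twoarc_hom:
  assumes h: "homeomorphism X X f g" and x: "x \<in> X" and t: "twoarc X x"
  shows "twoarc X (f x)"
proof -
  obtain \<gamma>1 \<gamma>2 where g: "arc_from X x \<gamma>1" "arc_from X x \<gamma>2"
     "path_image \<gamma>1 \<inter> path_image \<gamma>2 = {x}" using t unfolding twoarc_def by blast
  have injf: "inj_on f X" using h unfolding homeomorphism_def by (auto intro: inj_on_inverseI)
  have sub: "path_image \<gamma>1 \<subseteq> X" "path_image \<gamma>2 \<subseteq> X"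
    using g unfolding arc_from_def by auto
  show ?thesis unfolding twoarc_def
    apply (rule exI[of _ "f \<circ> \<gamma>1"], rule exI[of _ "f \<circ> \<gamma>2"])
    using arc_from_hom[OF h g(1)] arc_from_hom[OF h g(2)] inj_image_Int[OF injf sub(1) sub(2)] g(3)
    by simp
qed

lemma Bad_invariant:
  assumes f: "f \<in> Homeo X" and x: "x \<in> Bad X"
  shows "f x \<in> Bad X"
proof -
  obtain g where h: "homeomorphism X X f g" using f unfolding Homeo_def by blast
  have xX: "x \<in> X" using x unfolding Bad_def by auto
  have fx: "f x \<in> X" "g (f x) = x" using h xX unfolding homeomorphism_def by auto
  have "triod X (f x) \<or> \<not> twoarc X (f x)"
    using x triod_hom[OF h xX] twoarc_hom[OF homeomorphism_symD[OF h] fx(1)] fx(2) unfolding Bad_def by auto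
  then show ?thesis using fx unfolding Bad_def by auto
qed

lemma IL:
  fixes c \<gamma>1 \<gamma>2 :: "real \<Rightarrow> 'a::metric_space"
  assumes c: "arc c" "pathstart c = x"
    and g1: "arc \<gamma>1" "pathstart \<gamma>1 = x" "0 < d1" "d1 \<le> 1" "\<gamma>1 ` {0..d1} \<subseteq> path_image c"
    and g2: "arc \<gamma>2" "pathstart \<gamma>2 = x" "0 < d2" "d2 \<le> 1" "\<gamma>2 ` {0..d2} \<subseteq> path_image c"
  shows "\<exists>y. y \<noteq> x \<and> y \<in> path_image \<gamma>1 \<and> y \<in> path_image \<gamma>2"
proof -
  obtain ci where h: "homeomorphism {0..1} (path_image c) c ci" using homeomorphism_arc[OF c(1)] by blast
  have ci1: "\<And>s. s \<in> {0..1} \<Longrightarrow> ci (c s) = s" and ci2: "\<And>z. z \<in> path_image c \<Longrightarrow> c (ci z) = z"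
    and ci3: "\<And>z. z \<in> path_image c \<Longrightarrow> ci z \<in> {0..1}" and cci: "continuous_on (path_image c) ci"
    using h unfolding homeomorphism_def by auto
  have injc: "inj_on c {0..1}" using arc_imp_inj_on[OF c(1)] .
  have key: "\<exists>t>0. {0..t} \<subseteq> ci ` \<gamma> ` {0..d}"
    if g: "arc \<gamma>" "pathstart \<gamma> = x" "0 < d" "d \<le> 1" "\<gamma> ` {0..d} \<subseteq> path_image c" for \<gamma> d
  proof -
    have "continuous_on {0..1} \<gamma>" using arc_imp_path[OF g(1)] unfolding path_def .
    then have cg: "continuous_on {0..d} \<gamma>" by (rule continuous_on_subset) (use g(4) in auto)
    have conn: "connected (ci ` \<gamma> ` {0..d})"
      by (intro connected_continuous_image continuous_on_subset[OF cci g(5)] connected_continuous_image[OF cg])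
        simp
    have "0 \<in> ci ` \<gamma> ` {0..d}"
    proof -
      have "ci (\<gamma> 0) = 0" using g(2) c(2) ci1[of 0] by (simp add: pathstart_def)
      then show ?thesis using g(3) by force
    qed
    moreover have dd: "\<gamma> d \<in> path_image c" using g(3,5) by auto
    have "ci (\<gamma> d) \<noteq> 0"
    proof
      assume "ci (\<gamma> d) = 0"
      then have "\<gamma> d = c 0" using ci2[OF dd] by metis
      then have "\<gamma> d = \<gamma> 0" using g(2) c(2) by (simp add: pathstart_def)
      then have "d = 0" using arc_imp_inj_on[OF g(1)] g(3,4) unfolding inj_on_def by auto
      then show False using g(3) by simp
    qed
    moreover have "ci (\<gamma> d) \<in> ci ` \<gamma> ` {0..d}" using g(3) by auto
    moreover have "ci (\<gamma> d) \<ge> 0" using ci3[OF dd] by simp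
    ultimately show ?thesis using connected_contains_Icc[OF conn] by (metis less_eq_real_def)
  qed
  obtain t1 where t1: "t1 > 0" "{0..t1} \<subseteq> ci ` \<gamma>1 ` {0..d1}" using key[OF g1] by blast
  obtain t2 where t2: "t2 > 0" "{0..t2} \<subseteq> ci ` \<gamma>2 ` {0..d2}" using key[OF g2] by blast
  define t where "t = min t1 t2"
  have tin: "t \<in> ci ` \<gamma>1 ` {0..d1}" "t \<in> ci ` \<gamma>2 ` {0..d2}" using t1 t2 by (auto simp: t_def)
  obtain w1 where w1: "w1 \<in> \<gamma>1 ` {0..d1}" "t = ci w1" using tin(1) by blast
  obtain w2 where w2: "w2 \<in> \<gamma>2 ` {0..d2}" "t = ci w2" using tin(2) by blast
  have e1: "c t = w1" using ci2 w1 g1(5) by blast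
  have e2: "c t = w2" using ci2 w2 g2(5) by blast
  have t01: "t \<in> {0..1}" using ci3 w1 g1(5) by blast
  have "c t \<noteq> x"
  proof
    assume "c t = x"
    then have "c t = c 0" using c(2) by (simp add: pathstart_def)
    then have "t = 0" using injc t01 unfolding inj_on_def by auto
    then show False using t1 t2 by (simp add: t_def)
  qed
  moreover have "c t \<in> path_image \<gamma>1" using e1 w1 g1(4) unfolding path_image_def by auto
  moreover have "c t \<in> path_image \<gamma>2" using e2 w2 g2(4) unfolding path_image_def by auto
  ultimately show ?thesis by blast
qed

lemma initial_ball:
  fixes \<gamma> :: "real \<Rightarrow> 'a::metric_space"
  assumes "arc \<gamma>" "pathstart \<gamma> = x" "r > 0"
  shows "\<exists>d. 0 < d \<and> d \<le> 1 \<and> \<gamma> ` {0..d} \<subseteq> ball x r"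
proof -
  have "continuous_on {0..1} \<gamma>" using arc_imp_path[OF assms(1)] unfolding path_def .
  then obtain e where e: "e > 0" "\<forall>s\<in>{0..1}. dist s 0 < e \<longrightarrow> dist (\<gamma> s) (\<gamma> 0) < r"
    using assms(3) unfolding continuous_on_iff by (metis atLeastAtMost_iff order_refl zero_le_one)
  define d where "d = min (e / 2) 1"
  have "\<gamma> ` {0..d} \<subseteq> ball x r"
  proof
    fix z assume "z \<in> \<gamma> ` {0..d}"
    then obtain s where s: "s \<in> {0..d}" "z = \<gamma> s" by blast
    have "dist s 0 < e" using s e by (auto simp: d_def)
    then have "dist (\<gamma> s) (\<gamma> 0) < r" using e s by (auto simp: d_def)
    then show "z \<in> ball x r" using s assms(2) by (simp add: pathstart_def dist_commute)
  qed
  then show ?thesis using e by (intro exI[of _ d]) (auto simp: d_def)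
qed

lemma SL:
  fixes \<gamma> :: "real \<Rightarrow> 'a::metric_space"
  assumes g: "arc_from X x \<gamma>" and r: "r > 0" "X \<inter> ball x r \<subseteq> K1 \<union> K2"
    and K: "closed K1" "closed K2" "K1 \<inter> K2 = {x}"
  shows "\<exists>d. 0 < d \<and> d \<le> 1 \<and> (\<gamma> ` {0..d} \<subseteq> K1 \<or> \<gamma> ` {0..d} \<subseteq> K2)"
proof -
  have arc: "arc \<gamma>" and st: "pathstart \<gamma> = x" and sub: "path_image \<gamma> \<subseteq> X"
    using g unfolding arc_from_def by auto
  obtain d where d: "0 < d" "d \<le> 1" "\<gamma> ` {0..d} \<subseteq> ball x r" using initial_ball[OF arc st r(1)] by blast
  have inX: "\<gamma> ` {0..d} \<subseteq> X" using sub d unfolding path_image_def by auto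
  have inK: "\<gamma> ` {0..d} \<subseteq> K1 \<union> K2" using inX d r by blast
  define S where "S = \<gamma> ` {0<..d}"
  have conn: "connected S" unfolding S_def
    using arc_imp_path[OF arc] d unfolding path_def
    by (intro connected_continuous_image) (auto intro: continuous_on_subset)
  have xS: "x \<notin> S"
  proof
    assume "x \<in> S"
    then obtain s where s: "s \<in> {0<..d}" "\<gamma> s = \<gamma> 0" using st unfolding S_def pathstart_def by auto
    then have "s = 0" using arc_imp_inj_on[OF arc] d unfolding inj_on_def by auto
    then show False using s by simp
  qed
  have "S \<subseteq> \<gamma> ` {0..d}" unfolding S_def by (rule image_mono) auto
  then have SK: "S \<subseteq> K1 \<union> K2" using inK by blast
  have "S \<subseteq> K1 \<or> S \<subseteq> K2"
  proof (rule ccontr)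
    assume "\<not> (S \<subseteq> K1 \<or> S \<subseteq> K2)"
    then have "K1 \<inter> S \<noteq> {}" "K2 \<inter> S \<noteq> {}" using SK by auto
    moreover have "K1 \<inter> K2 \<inter> S = {}" using K(3) xS by auto
    ultimately show False using conn K SK unfolding connected_closed by blast
  qed
  moreover have "\<gamma> ` {0..d} = insert x S"
  proof -
    have "{0..d} = insert 0 {0<..d}" using d by auto
    then show ?thesis using st by (simp add: S_def pathstart_def)
  qed
  moreover have "x \<in> K1" "x \<in> K2" using K(3) by auto
  ultimately have "\<gamma> ` {0..d} \<subseteq> K1 \<or> \<gamma> ` {0..d} \<subseteq> K2" by auto
  then show ?thesis using d by blast
qed

lemma L2:
  fixes c1 c2 :: "real \<Rightarrow> 'a::metric_space"
  assumes c: "arc_from X x c1" "arc_from X x c2" "path_image c1 \<inter> path_image c2 = {x}"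
    and r: "r > 0" "X \<inter> ball x r \<subseteq> path_image c1 \<union> path_image c2"
  shows "\<not> triod X x" "twoarc X x"
proof -
  show "twoarc X x" unfolding twoarc_def using c by blast
  have cl: "closed (path_image c1)" "closed (path_image c2)"
    using c unfolding arc_from_def by (auto intro: closed_path_image arc_imp_path)
  have br: "\<exists>d. 0 < d \<and> d \<le> 1 \<and> (\<gamma> ` {0..d} \<subseteq> path_image c1 \<or> \<gamma> ` {0..d} \<subseteq> path_image c2)"
    if "arc_from X x \<gamma>" for \<gamma>
    by (rule SL[OF that r cl c(3)])
  have same: "\<exists>y. y \<noteq> x \<and> y \<in> path_image \<gamma> \<and> y \<in> path_image \<gamma>'"
    if g: "arc_from X x \<gamma>" "arc_from X x \<gamma>'" and cc: "arc_from X x c"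
      and d: "0 < d" "d \<le> 1" "\<gamma> ` {0..d} \<subseteq> path_image c"
      and d': "0 < d'" "d' \<le> 1" "\<gamma>' ` {0..d'} \<subseteq> path_image c" for \<gamma> \<gamma>' c d d'
    using IL[of c x \<gamma> d \<gamma>' d'] g cc d d' unfolding arc_from_def by auto
  show "\<not> triod X x"
  proof
    assume "triod X x"
    then obtain \<gamma>1 \<gamma>2 \<gamma>3 where g: "arc_from X x \<gamma>1" "arc_from X x \<gamma>2" "arc_from X x \<gamma>3"
     "path_image \<gamma>1 \<inter> path_image \<gamma>2 = {x}" "path_image \<gamma>1 \<inter> path_image \<gamma>3 = {x}"
     "path_image \<gamma>2 \<inter> path_image \<gamma>3 = {x}" unfolding triod_def by blast
    obtain d1 where d1: "0 < d1" "d1 \<le> 1" "\<gamma>1 ` {0..d1} \<subseteq> path_image c1 \<or> \<gamma>1 ` {0..d1} \<subseteq> path_image c2"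
      using br[OF g(1)] by blast
    obtain d2 where d2: "0 < d2" "d2 \<le> 1" "\<gamma>2 ` {0..d2} \<subseteq> path_image c1 \<or> \<gamma>2 ` {0..d2} \<subseteq> path_image c2"
      using br[OF g(2)] by blast
    obtain d3 where d3: "0 < d3" "d3 \<le> 1" "\<gamma>3 ` {0..d3} \<subseteq> path_image c1 \<or> \<gamma>3 ` {0..d3} \<subseteq> path_image c2"
      using br[OF g(3)] by blast
    have no: False if "arc_from X x \<gamma>" "arc_from X x \<gamma>'" "path_image \<gamma> \<inter> path_image \<gamma>' = {x}"
      "0 < d" "d \<le> 1" "0 < d'" "d' \<le> 1"
      "(\<gamma> ` {0..d} \<subseteq> path_image c1 \<and> \<gamma>' ` {0..d'} \<subseteq> path_image c1) \<or>
       (\<gamma> ` {0..d} \<subseteq> path_image c2 \<and> \<gamma>' ` {0..d'} \<subseteq> path_image c2)" for \<gamma> \<gamma>' d d'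
      using that(8)
    proof
      assume "\<gamma> ` {0..d} \<subseteq> path_image c1 \<and> \<gamma>' ` {0..d'} \<subseteq> path_image c1"
      then show False using same[OF that(1,2) c(1) that(4,5) _ that(6,7)] that(3) by blast
    next
      assume "\<gamma> ` {0..d} \<subseteq> path_image c2 \<and> \<gamma>' ` {0..d'} \<subseteq> path_image c2"
      then show False using same[OF that(1,2) c(2) that(4,5) _ that(6,7)] that(3) by blast
    qed
    show False
      using d1 d2 d3 no[OF g(1) g(2) g(4) d1(1,2) d2(1,2)] no[OF g(1) g(3) g(5) d1(1,2) d3(1,2)]
        no[OF g(2) g(3) g(6) d2(1,2) d3(1,2)] by blast
  qed
qed

lemma L1:
  fixes c :: "real \<Rightarrow> 'a::metric_space"
  assumes c: "arc_from X x c" and r: "r > 0" "X \<inter> ball x r \<subseteq> path_image c"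
  shows "\<not> twoarc X x"
proof
  assume "twoarc X x"
  then obtain \<gamma>1 \<gamma>2 where g: "arc_from X x \<gamma>1" "arc_from X x \<gamma>2" "path_image \<gamma>1 \<inter> path_image \<gamma>2 = {x}"
    unfolding twoarc_def by blast
  have in1: "\<exists>d. 0 < d \<and> d \<le> 1 \<and> \<gamma> ` {0..d} \<subseteq> path_image c" if "arc_from X x \<gamma>" for \<gamma>
  proof -
    have "arc \<gamma>" "pathstart \<gamma> = x" using that unfolding arc_from_def by auto
    then obtain d where d: "0 < d" "d \<le> 1" "\<gamma> ` {0..d} \<subseteq> ball x r"
      using initial_ball[of \<gamma> x r] r by blast
    have "\<gamma> ` {0..d} \<subseteq> X" using that d unfolding arc_from_def path_image_def by auto
    then show ?thesis using d r by blast
  qed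
  obtain d1 where d1: "0 < d1" "d1 \<le> 1" "\<gamma>1 ` {0..d1} \<subseteq> path_image c" using in1[OF g(1)] by blast
  obtain d2 where d2: "0 < d2" "d2 \<le> 1" "\<gamma>2 ` {0..d2} \<subseteq> path_image c" using in1[OF g(2)] by blast
  show False using IL[of c x \<gamma>1 d1 \<gamma>2 d2] g c d1 d2 unfolding arc_from_def by auto
qed

definition sp :: "real \<Rightarrow> real \<Rightarrow> (real \<Rightarrow> 'a) \<Rightarrow> real \<Rightarrow> 'a" where
  "sp a b g = (\<lambda>x. g ((b - a) * x + a))"

lemma sp_0 [simp]: "sp u v g 0 = g u" by (simp add: sp_def)
lemma sp_1 [simp]: "sp u v g 1 = g v" by (simp add: sp_def)
lemma sp_start [simp]: "pathstart (sp u v g) = g u" by (simp add: sp_def pathstart_def)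
lemma sp_finish [simp]: "pathfinish (sp u v g) = g v" by (simp add: sp_def pathfinish_def)

lemma path_image_sp': "path_image (sp u v g) = g ` closed_segment u v"
  by (auto simp add: closed_segment_real_eq path_image_def sp_def)

lemma path_image_sp_le: "u \<le> v \<Longrightarrow> path_image (sp u v g) = g ` {u..v}"
  by (simp add: path_image_sp' closed_segment_eq_real_ivl)

lemma path_image_sp_ge: "v \<le> u \<Longrightarrow> path_image (sp u v g) = g ` {v..u}"
  by (simp add: path_image_sp' closed_segment_eq_real_ivl)

lemma arc_sp:
  fixes g :: "real \<Rightarrow> 'a::topological_space"
  assumes a: "arc g" and uv: "u \<in> {0..1}" "v \<in> {0..1}" "u \<noteq> v"
  shows "arc (sp u v g)"
proof -
  have seg: "(\<lambda>x. (v - u) * x + u) ` {0..1} = closed_segment u v" by (simp add: closed_segment_real_eq)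
  have segsub: "closed_segment u v \<subseteq> {0..1}" using uv by (auto simp: closed_segment_eq_real_ivl split: if_splits)
  have "continuous_on {0..1} g" using arc_imp_path[OF a] unfolding path_def .
  moreover have "continuous_on {0..1} (\<lambda>x. (v - u) * x + u)" by (intro continuous_intros)
  moreover have imsub: "(\<lambda>x. (v - u) * x + u) ` {0..1} \<subseteq> {0..1}" using seg segsub by simp
  ultimately have "continuous_on {0..1} (\<lambda>x. g ((v - u) * x + u))"
    by (rule continuous_on_compose2)
  then have "path (sp u v g)" unfolding path_def sp_def .
  moreover have "inj_on (sp u v g) {0..1}"
  proof (rule inj_onI)
    fix x y :: real assume xy: "x \<in> {0..1}" "y \<in> {0..1}" "sp u v g x = sp u v g y"
    have "(v - u) * x + u \<in> {0..1}" "(v - u) * y + u \<in> {0..1}"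
      using imsub imageI[OF xy(1), of "\<lambda>x. (v - u) * x + u"] imageI[OF xy(2), of "\<lambda>x. (v - u) * x + u"] by auto
    then have "(v - u) * x + u = (v - u) * y + u" using arc_imp_inj_on[OF a] xy(3) unfolding sp_def inj_on_def by blast
    then show "x = y" using uv(3) by simp
  qed
  ultimately show ?thesis unfolding arc_def by blast
qed

lemma ends_sub: "ends e \<subseteq> path_image e"
  by (auto simp: ends_def)

lemma tgD:
  assumes "topological_graph X E"
  shows "compact X" "connected X" "finite E" "E \<noteq> {}" "\<And>e. e \<in> E \<Longrightarrow> arc e"
    "X = (\<Union>e\<in>E. path_image e)"
    "\<And>e1 e2. e1 \<in> E \<Longrightarrow> e2 \<in> E \<Longrightarrow> e1 \<noteq> e2 \<Longrightarrow> path_image e1 \<inter> path_image e2 \<subseteq> ends e1 \<inter> ends e2"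
  using assms unfolding topological_graph_def by auto

lemma arc_infinite: "arc e \<Longrightarrow> infinite (path_image e)"
proof
  assume a: "arc e" and f: "finite (path_image e)"
  have "finite {0..1::real}" using finite_imageD[OF f[unfolded path_image_def] arc_imp_inj_on[OF a]] .
  then show False using infinite_Icc[of "0::real" 1] by simp
qed

lemma orient:
  assumes "arc e" "v \<in> ends e"
  obtains e' where "arc e'" "pathstart e' = v" "path_image e' = path_image e" "ends e' = ends e"
proof (cases "v = pathstart e")
  case True
  then show ?thesis using that assms by blast
next
  case False
  then have "v = pathfinish e" using assms unfolding ends_def by auto
  then show ?thesis using that[of "reversepath e"] assms
    by (auto simp: arc_reversepath ends_def)
qed

lemma half_arc:
  assumes a: "arc e"
  shows "arc (sp 0 (1/2) e)" "pathstart (sp 0 (1/2) e) = pathstart e"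
    "path_image (sp 0 (1/2) e) \<subseteq> path_image e"
    "pathfinish e \<notin> path_image (sp 0 (1/2) e)"
    "closed (e ` {1/2..1})" "pathstart e \<notin> e ` {1/2..1}"
    "path_image e = path_image (sp 0 (1/2) e) \<union> e ` {1/2..1}"
    "arc_from X (pathstart e) e \<Longrightarrow> arc_from X (pathstart e) (sp 0 (1/2) e)"
proof -
  have inj: "inj_on e {0..1}" using arc_imp_inj_on[OF a] .
  have pim: "path_image (sp 0 (1/2) e) = e ` {0..1/2}" by (simp add: path_image_sp_le)
  show arc1: "arc (sp 0 (1/2) e)" by (rule arc_sp[OF a]) auto
  show "pathstart (sp 0 (1/2) e) = pathstart e" by (simp add: pathstart_def)
  show sub: "path_image (sp 0 (1/2) e) \<subseteq> path_image e" unfolding pim by (auto simp: path_image_def)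
  show "pathfinish e \<notin> path_image (sp 0 (1/2) e)"
  proof
    assume "pathfinish e \<in> path_image (sp 0 (1/2) e)"
    then obtain s where "s \<in> {0..1/2}" "e s = e 1" unfolding pim pathfinish_def by auto
    then show False using inj unfolding inj_on_def by force
  qed
  show "closed (e ` {1/2..1})"
    using arc_imp_path[OF a] unfolding path_def
    by (intro compact_imp_closed compact_continuous_image) (auto intro: continuous_on_subset)
  show "pathstart e \<notin> e ` {1/2..1}"
  proof
    assume "pathstart e \<in> e ` {1/2..1}"
    then obtain s where "s \<in> {1/2..1}" "e s = e 0" unfolding pathstart_def by auto
    then show False using inj unfolding inj_on_def by force
  qed
  show "path_image e = path_image (sp 0 (1/2) e) \<union> e ` {1/2..1}"
  proof -
    have "{0..1::real} = {0..1/2} \<union> {1/2..1}" by auto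
    then have "path_image e = e ` ({0..1/2} \<union> {1/2..1})" unfolding path_image_def by simp
    then show ?thesis unfolding pim by (simp add: image_Un)
  qed
  show "arc_from X (pathstart e) e \<Longrightarrow> arc_from X (pathstart e) (sp 0 (1/2) e)"
    using arc1 sub by (auto simp: arc_from_def pathstart_def)
qed

lemma avoid_closed:
  fixes x :: "'a::metric_space"
  assumes "closed C" "x \<notin> C"
  shows "\<exists>r>0. ball x r \<inter> C = {}"
proof -
  have "open (- C)" using assms(1) by auto
  then obtain r where "r > 0" "ball x r \<subseteq> - C" using assms(2) unfolding open_contains_ball by blast
  then show ?thesis by blast
qed

lemma vertex_in_image:
  assumes tg: "topological_graph X E" and v: "v \<in> graph_vertices E" and e: "e \<in> E" "v \<in> path_image e"
  shows "v \<in> ends e"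
proof -
  obtain e' where e': "e' \<in> E" "v \<in> ends e'" using v unfolding graph_vertices_def by blast
  show ?thesis
  proof (cases "e' = e")
    case False
    then show ?thesis using tgD(7)[OF tg e(1) e'(1)] e' e ends_sub by blast
  qed (use e' in auto)
qed

lemma nbhd:
  assumes tg: "topological_graph X E" and x: "x \<in> X"
  shows "\<exists>r>0. X \<inter> ball x r \<subseteq> (\<Union>e\<in>{e\<in>E. x \<in> path_image e}. path_image e)"
proof -
  define C where "C = (\<Union>e\<in>{e\<in>E. x \<notin> path_image e}. path_image e)"
  have "closed C" unfolding C_def using tgD(3)[OF tg] tgD(5)[OF tg]
    by (intro closed_UN) (auto intro: closed_path_image arc_imp_path)
  moreover have "x \<notin> C" unfolding C_def by auto
  ultimately obtain r where r: "r > 0" "ball x r \<inter> C = {}" using avoid_closed by blast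
  have "X \<inter> ball x r \<subseteq> (\<Union>e\<in>{e\<in>E. x \<in> path_image e}. path_image e)"
  proof
    fix y assume y: "y \<in> X \<inter> ball x r"
    then obtain e where e: "e \<in> E" "y \<in> path_image e" using tgD(6)[OF tg] by blast
    have "x \<in> path_image e" using r y e unfolding C_def by blast
    then show "y \<in> (\<Union>e\<in>{e\<in>E. x \<in> path_image e}. path_image e)" using e by blast
  qed
  then show ?thesis using r by blast
qed

lemma arc_from_edge: "topological_graph X E \<Longrightarrow> e \<in> E \<Longrightarrow> arc e' \<Longrightarrow> path_image e' = path_image e \<Longrightarrow>
   arc_from X (pathstart e') e'"
  using tgD(6) by (auto simp: arc_from_def)

lemma two_edges_Int:
  assumes tg: "topological_graph X E" and e: "e1 \<in> E" "e2 \<in> E" "e1 \<noteq> e2"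
    and o1: "arc e1'" "pathstart e1' = v" "path_image e1' = path_image e1" "ends e1' = ends e1"
    and o2: "arc e2'" "pathstart e2' = v" "path_image e2' = path_image e2" "ends e2' = ends e2"
  shows "path_image (sp 0 (1/2) e1') \<inter> path_image (sp 0 (1/2) e2') = {v}"
proof (intro antisym subsetI)
  fix z assume z: "z \<in> path_image (sp 0 (1/2) e1') \<inter> path_image (sp 0 (1/2) e2')"
  have "z \<in> path_image e1 \<inter> path_image e2" using z half_arc(3)[OF o1(1)] half_arc(3)[OF o2(1)] o1 o2 by auto
  then have "z \<in> ends e1' \<inter> ends e2'" using tgD(7)[OF tg e] o1 o2 by auto
  moreover have "z \<noteq> pathfinish e1'" using z half_arc(4)[OF o1(1)] by auto
  ultimately show "z \<in> {v}" using o1 unfolding ends_def by auto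
next
  fix z assume "z \<in> {v}"
  have "pathstart e1' \<in> path_image (sp 0 (1/2) e1')" "pathstart e2' \<in> path_image (sp 0 (1/2) e2')"
    using pathstart_in_path_image[of "sp 0 (1/2) e1'"] pathstart_in_path_image[of "sp 0 (1/2) e2'"]
    by (simp_all add: pathstart_def)
  then show "z \<in> path_image (sp 0 (1/2) e1') \<inter> path_image (sp 0 (1/2) e2')"
    using o1 o2 \<open>z \<in> {v}\<close> by auto
qed

lemma edges_at_vertex:
  assumes tg: "topological_graph X E" and v: "v \<in> graph_vertices E"
  shows "{e\<in>E. v \<in> path_image e} = {e\<in>E. v \<in> ends e}"
  using vertex_in_image[OF tg v] ends_sub by blast

lemma interior_not_Bad:
  assumes tg: "topological_graph X E" and x: "x \<in> X" "x \<notin> graph_vertices E"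
  shows "x \<notin> Bad X"
proof -
  obtain e where e: "e \<in> E" "x \<in> path_image e" using x tgD(6)[OF tg] by blast
  have a: "arc e" using tgD(5)[OF tg e(1)] .
  obtain s where s: "s \<in> {0..1}" "x = e s" using e(2) unfolding path_image_def by blast
  have s01: "s \<noteq> 0" "s \<noteq> 1" using s x e(1) unfolding graph_vertices_def ends_def pathstart_def pathfinish_def by auto
  define c1 where "c1 = sp s 0 e"
  define c2 where "c2 = sp s 1 e"
  have im: "path_image c1 = e ` {0..s}" "path_image c2 = e ` {s..1}"
    using s by (auto simp: c1_def c2_def path_image_sp_le path_image_sp_ge)
  have sub: "path_image e \<subseteq> X" using tgD(6)[OF tg] e(1) by blast
  have arcs: "arc c1" "arc c2" unfolding c1_def c2_def using s s01 by (auto intro!: arc_sp[OF a])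
  have subs1: "path_image c1 \<subseteq> path_image e"
    unfolding im(1) path_image_def[of e] by (rule image_mono) (use s(1) in auto)
  have subs2: "path_image c2 \<subseteq> path_image e"
    unfolding im(2) path_image_def[of e] by (rule image_mono) (use s(1) in auto)
  note subs = subs1 subs2
  have ps: "pathstart c1 = x" "pathstart c2 = x" using s(2) by (simp_all add: c1_def c2_def)
  have af1: "arc_from X x c1" unfolding arc_from_def
    using arcs(1) ps(1) subset_trans[OF subs(1) sub] by (intro conjI)
  have af2: "arc_from X x c2" unfolding arc_from_def
    using arcs(2) ps(2) subset_trans[OF subs(2) sub] by (intro conjI)
  note af = af1 af2
  have inj: "inj_on e {0..1}" using arc_imp_inj_on[OF a] .
  have int: "path_image c1 \<inter> path_image c2 = {x}"
  proof (intro antisym subsetI)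
    fix z assume "z \<in> path_image c1 \<inter> path_image c2"
    then obtain a b where ab: "a \<in> {0..s}" "b \<in> {s..1}" "z = e a" "z = e b" unfolding im by blast
    then have "a = b" using inj s unfolding inj_on_def by auto
    then have "a = s" using ab by auto
    then show "z \<in> {x}" using ab s by auto
  qed (use s im in auto)
  obtain r where r: "r > 0" "X \<inter> ball x r \<subseteq> (\<Union>e\<in>{e\<in>E. x \<in> path_image e}. path_image e)"
    using nbhd[OF tg x(1)] by blast
  have "{e\<in>E. x \<in> path_image e} = {e}"
  proof (intro antisym subsetI)
    fix e' assume "e' \<in> {e\<in>E. x \<in> path_image e}"
    then have e': "e' \<in> E" "x \<in> path_image e'" by auto
    show "e' \<in> {e}"
    proof (rule ccontr)
      assume "e' \<notin> {e}"
      then have "x \<in> ends e" using tgD(7)[OF tg e(1) e'(1)] e e' by blast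
      then show False using x(2) e(1) unfolding graph_vertices_def by blast
    qed
  qed (use e in auto)
  then have "X \<inter> ball x r \<subseteq> path_image e" using r by auto
  moreover have "path_image e = path_image c1 \<union> path_image c2"
  proof -
    have "{0..1::real} = {0..s} \<union> {s..1}" using s by auto
    then have "path_image e = e ` ({0..s} \<union> {s..1})" unfolding path_image_def by simp
    then show ?thesis unfolding im by (simp add: image_Un)
  qed
  ultimately have "X \<inter> ball x r \<subseteq> path_image c1 \<union> path_image c2" by simp
  then have "\<not> triod X x" "twoarc X x" using L2[OF af int r(1)] by auto
  then show ?thesis unfolding Bad_def by auto
qed

lemma deg_finite: "topological_graph X E \<Longrightarrow> finite {e\<in>E. v \<in> ends e}"
  by (drule tgD(3)) simp

lemma vertices_finite: "topological_graph X E \<Longrightarrow> finite (graph_vertices E)"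
  unfolding graph_vertices_def by (drule tgD(3)) (auto simp: ends_def)

lemma vertex_in_X: "topological_graph X E \<Longrightarrow> v \<in> graph_vertices E \<Longrightarrow> v \<in> X"
  unfolding graph_vertices_def using tgD(6) ends_sub by blast

lemma edge_arc_from:
  assumes tg: "topological_graph X E" and e: "e \<in> E" and v: "v \<in> ends e"
  obtains e' where "arc e'" "pathstart e' = v" "path_image e' = path_image e" "ends e' = ends e"
    "arc_from X v e'"
proof -
  obtain e' where o: "arc e'" "pathstart e' = v" "path_image e' = path_image e" "ends e' = ends e"
    using orient[OF tgD(5)[OF tg e] v] by blast
  have "path_image e \<subseteq> X" using tgD(6)[OF tg] e by blast
  then have "arc_from X v e'" using o unfolding arc_from_def by auto
  then show ?thesis using that o by blast
qed

lemma nbhd_vertex: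
  assumes tg: "topological_graph X E" and v: "v \<in> graph_vertices E"
  shows "\<exists>r>0. X \<inter> ball v r \<subseteq> (\<Union>e\<in>{e\<in>E. v \<in> ends e}. path_image e)"
  using nbhd[OF tg vertex_in_X[OF tg v]] edges_at_vertex[OF tg v] by simp

lemma deg2_not_Bad:
  assumes tg: "topological_graph X E" and v: "v \<in> graph_vertices E" and d: "graph_degree E v = 2"
  shows "v \<notin> Bad X"
proof -
  obtain e1 e2 where A: "{e\<in>E. v \<in> ends e} = {e1, e2}" "e1 \<noteq> e2"
    using d unfolding graph_degree_def card_2_iff by blast
  have e: "e1 \<in> E" "v \<in> ends e1" "e2 \<in> E" "v \<in> ends e2" using A(1) by blast+
  obtain e1' where o1: "arc e1'" "pathstart e1' = v" "path_image e1' = path_image e1" "ends e1' = ends e1"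
    "arc_from X v e1'" using edge_arc_from[OF tg e(1,2)] by blast
  obtain e2' where o2: "arc e2'" "pathstart e2' = v" "path_image e2' = path_image e2" "ends e2' = ends e2"
    "arc_from X v e2'" using edge_arc_from[OF tg e(3,4)] by blast
  obtain r1 where r1: "r1 > 0" "X \<inter> ball v r1 \<subseteq> path_image e1 \<union> path_image e2"
    using nbhd_vertex[OF tg v] A(1) by auto
  define C where "C = e1' ` {1/2..1} \<union> e2' ` {1/2..1}"
  have "closed C" unfolding C_def using half_arc(5)[OF o1(1)] half_arc(5)[OF o2(1)] by auto
  moreover have "v \<notin> C" unfolding C_def using half_arc(6)[OF o1(1)] half_arc(6)[OF o2(1)] o1(2) o2(2) by auto
  ultimately obtain r2 where r2: "r2 > 0" "ball v r2 \<inter> C = {}" using avoid_closed by blast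
  define r where "r = min r1 r2"
  have "X \<inter> ball v r \<subseteq> path_image (sp 0 (1/2) e1') \<union> path_image (sp 0 (1/2) e2')"
  proof
    fix y assume y: "y \<in> X \<inter> ball v r"
    then have "y \<in> path_image e1' \<union> path_image e2'" using r1 o1(3) o2(3) by (auto simp: r_def)
    moreover have "y \<notin> C" using y r2 by (auto simp: r_def)
    ultimately show "y \<in> path_image (sp 0 (1/2) e1') \<union> path_image (sp 0 (1/2) e2')"
      using half_arc(7)[OF o1(1)] half_arc(7)[OF o2(1)] unfolding C_def by blast
  qed
  moreover have "r > 0" using r1 r2 by (simp add: r_def)
  moreover have "arc_from X v (sp 0 (1/2) e1')" "arc_from X v (sp 0 (1/2) e2')"
    using half_arc(8)[OF o1(1)] half_arc(8)[OF o2(1)] o1 o2 by auto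
  moreover have "path_image (sp 0 (1/2) e1') \<inter> path_image (sp 0 (1/2) e2') = {v}"
    by (rule two_edges_Int[OF tg e(1) e(3) A(2) o1(1-4) o2(1-4)])
  ultimately have "\<not> triod X v" "twoarc X v" using L2[of X v "sp 0 (1/2) e1'" "sp 0 (1/2) e2'" r] by blast+
  then show ?thesis unfolding Bad_def by auto
qed

lemma deg1_Bad:
  assumes tg: "topological_graph X E" and v: "v \<in> graph_vertices E" and d: "graph_degree E v = 1"
  shows "v \<in> Bad X"
proof -
  have "card {e\<in>E. v \<in> ends e} = Suc 0" using d by (simp add: graph_degree_def)
  then obtain e1 where A: "{e\<in>E. v \<in> ends e} = {e1}"
    unfolding card_1_singleton_iff by blast
  have e: "e1 \<in> E" "v \<in> ends e1" using A(1) by blast+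
  obtain e1' where o1: "arc e1'" "pathstart e1' = v" "path_image e1' = path_image e1" "ends e1' = ends e1"
    "arc_from X v e1'" using edge_arc_from[OF tg e(1,2)] by blast
  obtain r1 where r1: "r1 > 0" "X \<inter> ball v r1 \<subseteq> path_image e1"
    using nbhd_vertex[OF tg v] A(1) by auto
  have "\<not> twoarc X v" by (rule L1[OF o1(5) r1(1)]) (use r1 o1 in auto)
  then show ?thesis using vertex_in_X[OF tg v] unfolding Bad_def by auto
qed

lemma three_distinct:
  assumes "finite A" "3 \<le> card A"
  shows "\<exists>a b c. a \<in> A \<and> b \<in> A \<and> c \<in> A \<and> a \<noteq> b \<and> a \<noteq> c \<and> b \<noteq> c"
proof -
  have "Suc (Suc (Suc 0)) \<le> card A" using assms by simp
  then obtain a B where B: "A = insert a B" "a \<notin> B" "Suc (Suc 0) \<le> card B" "finite B"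
    using card_le_Suc_iff[THEN iffD1] by metis
  then obtain b C where C: "B = insert b C" "b \<notin> C" "Suc 0 \<le> card C" "finite C"
    using card_le_Suc_iff[THEN iffD1, OF B(3)] by metis
  then obtain c D where D: "C = insert c D" "c \<notin> D"
    using card_le_Suc_iff[THEN iffD1, OF C(3)] by metis
  show ?thesis using B C D by (intro exI[of _ a] exI[of _ b] exI[of _ c]) auto
qed

lemma deg3_Bad:
  assumes tg: "topological_graph X E" and v: "v \<in> graph_vertices E" and d: "graph_degree E v \<ge> 3"
  shows "v \<in> Bad X"
proof -
  obtain e1 e2 e3 where A: "e1 \<in> {e\<in>E. v \<in> ends e}" "e2 \<in> {e\<in>E. v \<in> ends e}" "e3 \<in> {e\<in>E. v \<in> ends e}"
    "e1 \<noteq> e2" "e1 \<noteq> e3" "e2 \<noteq> e3"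
    using three_distinct[OF deg_finite[OF tg] d[unfolded graph_degree_def]] by blast
  have e: "e1 \<in> E" "v \<in> ends e1" "e2 \<in> E" "v \<in> ends e2" "e3 \<in> E" "v \<in> ends e3" using A by blast+
  obtain e1' where o1: "arc e1'" "pathstart e1' = v" "path_image e1' = path_image e1" "ends e1' = ends e1"
    "arc_from X v e1'" using edge_arc_from[OF tg e(1,2)] by blast
  obtain e2' where o2: "arc e2'" "pathstart e2' = v" "path_image e2' = path_image e2" "ends e2' = ends e2"
    "arc_from X v e2'" using edge_arc_from[OF tg e(3,4)] by blast
  obtain e3' where o3: "arc e3'" "pathstart e3' = v" "path_image e3' = path_image e3" "ends e3' = ends e3"
    "arc_from X v e3'" using edge_arc_from[OF tg e(5,6)] by blast
  have "arc_from X v (sp 0 (1/2) e1')" "arc_from X v (sp 0 (1/2) e2')" "arc_from X v (sp 0 (1/2) e3')"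
    using half_arc(8)[OF o1(1)] half_arc(8)[OF o2(1)] half_arc(8)[OF o3(1)] o1 o2 o3 by auto
  moreover have "path_image (sp 0 (1/2) e1') \<inter> path_image (sp 0 (1/2) e2') = {v}"
    by (rule two_edges_Int[OF tg e(1) e(3) A(4) o1(1-4) o2(1-4)])
  moreover have "path_image (sp 0 (1/2) e1') \<inter> path_image (sp 0 (1/2) e3') = {v}"
    by (rule two_edges_Int[OF tg e(1) e(5) A(5) o1(1-4) o3(1-4)])
  moreover have "path_image (sp 0 (1/2) e2') \<inter> path_image (sp 0 (1/2) e3') = {v}"
    by (rule two_edges_Int[OF tg e(3) e(5) A(6) o2(1-4) o3(1-4)])
  ultimately have "triod X v" unfolding triod_def by blast
  then show ?thesis using vertex_in_X[OF tg v] unfolding Bad_def by auto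
qed

lemma three_four:
  assumes tg: "topological_graph X E" and z: "0 \<in> P_h X"
  shows "\<forall>v\<in>graph_vertices E. graph_degree E v = 2"
proof (rule ccontr)
  assume "\<not> (\<forall>v\<in>graph_vertices E. graph_degree E v = 2)"
  then obtain v where v: "v \<in> graph_vertices E" "graph_degree E v \<noteq> 2" by blast
  have "graph_degree E v \<noteq> 0"
  proof -
    obtain e where "e \<in> E" "v \<in> ends e" using v(1) unfolding graph_vertices_def by blast
    then have "{e\<in>E. v \<in> ends e} \<noteq> {}" by blast
    then show ?thesis unfolding graph_degree_def using deg_finite[OF tg] by simp
  qed
  then have "graph_degree E v = 1 \<or> graph_degree E v \<ge> 3" using v(2) by linarith
  then have vB: "v \<in> Bad X" using deg1_Bad[OF tg v(1)] deg3_Bad[OF tg v(1)] by blast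
  have BV: "Bad X \<subseteq> graph_vertices E"
  proof
    fix x assume x: "x \<in> Bad X"
    then have "x \<in> X" unfolding Bad_def by auto
    then show "x \<in> graph_vertices E" using interior_not_Bad[OF tg] x by blast
  qed
  have finB: "finite (Bad X)" using BV vertices_finite[OF tg] finite_subset by blast
  obtain e where e: "e \<in> E" using tgD(4)[OF tg] by blast
  have "path_image e \<subseteq> X" using tgD(6)[OF tg] e by blast
  then have "infinite X" using arc_infinite[OF tgD(5)[OF tg e]] infinite_super by blast
  then have BX: "Bad X \<noteq> X" using finB by auto
  have BsubX: "Bad X \<subseteq> X" unfolding Bad_def by auto
  obtain G where G: "homeo_subgroup G X" "height G X = 0" using z unfolding P_h_def by auto
  have GH: "G \<subseteq> Homeo X" using G(1) unfolding homeo_subgroup_def by blast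
  have inv: "\<forall>g\<in>G. \<forall>y\<in>Bad X. g y \<in> Bad X"
  proof (intro ballI)
    fix g y assume "g \<in> G" "y \<in> Bad X"
    then show "g y \<in> Bad X" using Bad_invariant[of g X y] GH by blast
  qed
  have ciB: "closed_invariant G X (Bad X)"
    unfolding closed_invariant_def invariant_def
    using vB BsubX inv closed_subset[OF BsubX finite_imp_closed[OF finB]] by blast
  have Xne: "X \<noteq> {}" using vB BsubX by blast
  have ciX: "closed_invariant G X X"
    unfolding closed_invariant_def invariant_def
    using Xne GH Homeo_mem by auto
  define Y where "Y = (\<lambda>i::nat. if i = 0 then Bad X else X)"
  have "enat 1 \<le> height G X"
    by (rule height_ge[of 1 G X Y]) (use ciB ciX BX BsubX in \<open>auto simp: Y_def\<close>)
  then show False using G(2) by (simp add: zero_enat_def)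
qed

lemma degree2_set:
  assumes tg: "topological_graph X E" and e: "e \<in> E" "v \<in> ends e" and d: "graph_degree E v = 2"
  obtains e' where "e' \<in> E" "e' \<noteq> e" "{f\<in>E. v \<in> ends f} = {e, e'}"
proof -
  obtain x y where xy: "{f\<in>E. v \<in> ends f} = {x, y}" "x \<noteq> y"
    using d unfolding graph_degree_def card_2_iff by blast
  have "e = x \<or> e = y" using xy(1) e by blast
  then show ?thesis
  proof
    assume "e = x" then show ?thesis using that[of y] xy by auto
  next
    assume "e = y" then show ?thesis using that[of x] xy by auto
  qed
qed

lemma ends_arc: "arc e \<Longrightarrow> ends e = {pathstart e, pathfinish e} \<and> pathstart e \<noteq> pathfinish e"
  using arc_distinct_ends by (fastforce simp: ends_def)

lemma two_cycle:
  assumes tg: "topological_graph X E" and deg: "\<forall>v\<in>graph_vertices E. graph_degree E v = 2"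
    and e: "e \<in> E" and e': "e' \<in> E" "e' \<noteq> e" and ee: "ends e' = ends e"
  shows "X homeomorphic sphere (0::complex) 1"
proof -
  define a where "a = pathstart e"
  define b where "b = pathfinish e"
  have ae: "arc e" using tgD(5)[OF tg e] .
  have ab: "ends e = {a, b}" "a \<noteq> b" using ends_arc[OF ae] by (auto simp: a_def b_def)
  have V: "a \<in> graph_vertices E" "b \<in> graph_vertices E" using e ab unfolding graph_vertices_def by auto
  have Da: "{f\<in>E. a \<in> ends f} = {e, e'}"
  proof -
    have "a \<in> ends e" "graph_degree E a = 2" using ab deg V by auto
    then obtain g where g: "g \<in> E" "g \<noteq> e" "{f\<in>E. a \<in> ends f} = {e, g}"
      using degree2_set[OF tg e] by blast
    have "e' \<in> {f\<in>E. a \<in> ends f}" using e' ee ab by auto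
    then show ?thesis using g e' by auto
  qed
  have Db: "{f\<in>E. b \<in> ends f} = {e, e'}"
  proof -
    have "b \<in> ends e" "graph_degree E b = 2" using ab deg V by auto
    then obtain g where g: "g \<in> E" "g \<noteq> e" "{f\<in>E. b \<in> ends f} = {e, g}"
      using degree2_set[OF tg e] by blast
    have "e' \<in> {f\<in>E. b \<in> ends f}" using e' ee ab by auto
    then show ?thesis using g e' by auto
  qed
  have EE: "E = {e, e'}"
  proof (rule ccontr)
    assume "E \<noteq> {e, e'}"
    then obtain f where f: "f \<in> E" "f \<noteq> e" "f \<noteq> e'" using e e' by blast
    define K1 where "K1 = path_image e \<union> path_image e'"
    define K2 where "K2 = (\<Union>g\<in>E - {e, e'}. path_image g)"
    have cl: "closed K1" "closed K2" unfolding K1_def K2_def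
      using tgD(3)[OF tg] tgD(5)[OF tg] e e'
      by (auto intro!: closed_UN closed_Un closed_path_image arc_imp_path)
    have XK: "X \<subseteq> K1 \<union> K2" unfolding K1_def K2_def using tgD(6)[OF tg] by auto
    have disj: "K1 \<inter> K2 = {}"
    proof (rule ccontr)
      assume "K1 \<inter> K2 \<noteq> {}"
      then obtain z g h where z: "g \<in> E - {e, e'}" "h \<in> {e, e'}" "z \<in> path_image g" "z \<in> path_image h"
        unfolding K1_def K2_def by blast
      have "h \<in> E" "h \<noteq> g" using z e e' by auto
      then have "z \<in> ends h \<inter> ends g" using tgD(7)[OF tg] z by blast
      moreover have "ends h = {a, b}" using z(2) ee ab by auto
      ultimately have "g \<in> {f\<in>E. a \<in> ends f} \<or> g \<in> {f\<in>E. b \<in> ends f}" using z(1) by auto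
      then show False using Da Db z(1) by auto
    qed
    have n1: "K1 \<inter> X \<noteq> {}" unfolding K1_def using tgD(6)[OF tg] e by blast
    have n2: "K2 \<inter> X \<noteq> {}" unfolding K2_def using tgD(6)[OF tg] f by blast
    show False using tgD(2)[OF tg] cl XK disj n1 n2 unfolding connected_closed by blast
  qed
  have ae': "arc e'" using tgD(5)[OF tg e'(1)] .
  have "b \<in> ends e'" using ee ab by auto
  then obtain g where g: "arc g" "pathstart g = b" "path_image g = path_image e'" "ends g = ends e'"
    using orient[OF ae'] by blast
  have gf: "pathfinish g = a" using ends_arc[OF g(1)] g(2,4) ee ab by auto
  have int: "path_image e \<inter> path_image g \<subseteq> {pathstart e, pathstart g}"
    using tgD(7)[OF tg e e'(1)] e'(2) g(3) ee ab g(2) by (auto simp: a_def b_def)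
  have sp: "simple_path (e +++ g)"
    by (rule simple_path_join_loop[OF ae g(1)]) (use g(2) gf int in \<open>auto simp: a_def b_def\<close>)
  have "X = path_image (e +++ g)"
    using tgD(6)[OF tg] EE path_image_join[of e g] g(2,3) by (auto simp: b_def)
  moreover have "pathfinish (e +++ g) = pathstart (e +++ g)" using gf by (simp add: a_def)
  ultimately show ?thesis using homeomorphic_simple_path_image_circle[OF sp] by auto
qed

lemma merge_step:
  assumes tg: "topological_graph X E" and deg: "\<forall>v\<in>graph_vertices E. graph_degree E v = 2"
    and e: "e \<in> E" and e': "e' \<in> E" "e' \<noteq> e" and Da: "{f\<in>E. pathstart e \<in> ends f} = {e, e'}"
    and ne: "ends e' \<noteq> ends e"
  shows "\<exists>E'. topological_graph X E' \<and> (\<forall>v\<in>graph_vertices E'. graph_degree E' v = 2) \<and> card E' < card E"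
proof -
  define a where "a = pathstart e"
  define b where "b = pathfinish e"
  have ae: "arc e" using tgD(5)[OF tg e] .
  have ae': "arc e'" using tgD(5)[OF tg e'(1)] .
  have ab: "ends e = {a, b}" "a \<noteq> b" using ends_arc[OF ae] by (auto simp: a_def b_def)
  have Da': "{f\<in>E. a \<in> ends f} = {e, e'}" using Da by (simp add: a_def)
  have aee': "a \<in> ends e'" using Da' by blast
  obtain h where h: "arc h" "pathstart h = a" "path_image h = path_image e'" "ends h = ends e'"
    using orient[OF ae' aee'] by blast
  define c where "c = pathfinish h"
  have ac: "ends e' = {a, c}" "a \<noteq> c" using ends_arc[OF h(1)] h(2,4) by (auto simp: c_def)
  have bc: "b \<noteq> c" using ne ab ac by auto
  define g1 where "g1 = reversepath h"
  have g1: "arc g1" "pathstart g1 = c" "pathfinish g1 = a" "path_image g1 = path_image e'"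
    using h arc_reversepath[OF h(1)] by (auto simp: g1_def c_def)
  have int: "path_image g1 \<inter> path_image e \<subseteq> {pathstart e}"
    using tgD(7)[OF tg e'(1) e e'(2)] g1(4) ab ac bc by (auto simp: a_def)
  define j where "j = g1 +++ e"
  have aj: "arc j" unfolding j_def by (rule arc_join[OF g1(1) ae]) (use g1 int in \<open>auto simp: a_def\<close>)
  have pj: "path_image j = path_image e' \<union> path_image e"
    unfolding j_def using path_image_join[of g1 e] g1 by (simp add: a_def)
  have ej: "ends j = {c, b}" using g1 by (simp add: j_def ends_def b_def)
  have jE: "j \<notin> E"
  proof
    assume jE: "j \<in> E"
    show False
    proof (cases "j = e")
      case True
      then have "path_image e' \<subseteq> path_image e' \<inter> path_image e" using pj by auto
      also have "\<dots> \<subseteq> ends e' \<inter> ends e" using tgD(7)[OF tg e'(1) e e'(2)] .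
      finally have "finite (path_image e')" by (rule finite_subset) (simp add: ends_def)
      then show False using arc_infinite[OF ae'] by simp
    next
      case False
      then have "path_image e \<subseteq> path_image j \<inter> path_image e" using pj by auto
      also have "\<dots> \<subseteq> ends j \<inter> ends e" using tgD(7)[OF tg jE e False] .
      finally have "finite (path_image e)" by (rule finite_subset) (simp add: ends_def)
      then show False using arc_infinite[OF ae] by simp
    qed
  qed
  define E' where "E' = insert j (E - {e, e'})"
  have finE: "finite E" using tgD(3)[OF tg] .
  have cardE': "card E' < card E"
  proof -
    have "card (E - {e, e'}) = card E - 2" using finE e e' by (simp add: card_Diff_subset)
    moreover have "card E \<ge> 2"
    proof -
      have "{e, e'} \<subseteq> E" using e e' by auto
      then have "card {e, e'} \<le> card E" by (rule card_mono[OF finE])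
      then show ?thesis using e'(2) by simp
    qed
    moreover have "card E' = card (E - {e, e'}) + 1" unfolding E'_def using jE finE by simp
    ultimately show ?thesis by linarith
  qed
  have aoth: "a \<notin> ends f" if "f \<in> E - {e, e'}" for f using that Da' by blast
  have Kj: "path_image f \<inter> path_image j \<subseteq> ends f \<inter> ends j" if f: "f \<in> E - {e, e'}" for f
  proof
    fix z assume z: "z \<in> path_image f \<inter> path_image j"
    have fE: "f \<in> E" "f \<noteq> e" "f \<noteq> e'" using f by auto
    show "z \<in> ends f \<inter> ends j"
    proof (cases "z \<in> path_image e'")
      case True
      then have "z \<in> ends f \<inter> ends e'" using tgD(7)[OF tg fE(1) e'(1) fE(3)] z by blast
      then show ?thesis using aoth[OF f] ac ej by auto
    next
      case False
      then have "z \<in> path_image e" using z pj by auto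
      then have "z \<in> ends f \<inter> ends e" using tgD(7)[OF tg fE(1) e fE(2)] z by blast
      then show ?thesis using aoth[OF f] ab ej by auto
    qed
  qed
  have tg': "topological_graph X E'"
    unfolding topological_graph_def
  proof (intro conjI ballI impI)
    show "compact X" "connected X" using tgD[OF tg] by auto
    show "finite E'" "E' \<noteq> {}" using finE by (auto simp: E'_def)
    show "arc f" if "f \<in> E'" for f using that aj tgD(5)[OF tg] by (auto simp: E'_def)
    show "X = (\<Union>f\<in>E'. path_image f)"
    proof -
      have "E = insert e (insert e' (E - {e, e'}))" using e e' by auto
      then have "(\<Union>f\<in>E. path_image f) = path_image e \<union> path_image e' \<union> (\<Union>f\<in>E - {e, e'}. path_image f)"
        by (metis (no_types, lifting) UN_insert Un_assoc)
      also have "\<dots> = (\<Union>f\<in>E'. path_image f)" unfolding E'_def using pj by auto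
      finally show ?thesis using tgD(6)[OF tg] by simp
    qed
  next
    fix f1 f2 assume f: "f1 \<in> E'" "f2 \<in> E'" "f1 \<noteq> f2"
    show "path_image f1 \<inter> path_image f2 \<subseteq> ends f1 \<inter> ends f2"
    proof (cases "f1 = j")
      case True
      then have "f2 \<in> E - {e, e'}" using f by (auto simp: E'_def)
      then show ?thesis using Kj True by blast
    next
      case False
      then have f1E: "f1 \<in> E - {e, e'}" using f by (auto simp: E'_def)
      show ?thesis
      proof (cases "f2 = j")
        case True
        then show ?thesis using Kj[OF f1E] by blast
      next
        case False
        then have "f2 \<in> E - {e, e'}" using f by (auto simp: E'_def)
        then show ?thesis using tgD(7)[OF tg] f1E f(3) by blast
      qed
    qed
  qed
  have deg': "\<forall>w\<in>graph_vertices E'. graph_degree E' w = 2"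
  proof
    fix w assume w: "w \<in> graph_vertices E'"
    then obtain f where f: "f \<in> E'" "w \<in> ends f" unfolding graph_vertices_def by blast
    have wV: "w \<in> graph_vertices E \<and> w \<noteq> a"
    proof (cases "f = j")
      case True
      then have "w = c \<or> w = b" using f ej by auto
      then show ?thesis using ac ab e e' bc unfolding graph_vertices_def by auto
    next
      case False
      then have "f \<in> E - {e, e'}" using f by (auto simp: E'_def)
      then show ?thesis using f aoth unfolding graph_vertices_def by auto
    qed
    define Os where "Os = {f\<in>E - {e, e'}. w \<in> ends f}"
    have finO: "finite Os" using finE by (simp add: Os_def)
    have eO: "e \<notin> Os" "e' \<notin> Os" "j \<notin> Os" using jE by (auto simp: Os_def)
    have S': "{f\<in>E'. w \<in> ends f} = (if w = b \<or> w = c then insert j Os else Os)"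
      using ej by (auto simp: E'_def Os_def)
    have S: "{f\<in>E. w \<in> ends f} = (if w = b then insert e Os else if w = c then insert e' Os else Os)"
      using ab ac wV bc e e' by (auto simp: Os_def)
    have "graph_degree E w = 2" using deg wV by blast
    then have "card {f\<in>E. w \<in> ends f} = 2" by (simp add: graph_degree_def)
    then show "graph_degree E' w = 2" unfolding graph_degree_def S' using S finO eO bc
      by (auto split: if_splits)
  qed
  show ?thesis using tg' deg' cardE' by blast
qed

lemma four_one:
  "topological_graph X E \<Longrightarrow> (\<forall>v\<in>graph_vertices E. graph_degree E v = 2) \<Longrightarrow> X homeomorphic sphere (0::complex) 1"
proof (induction "card E" arbitrary: E rule: less_induct)
  case less
  note tg = less.prems(1) and deg = less.prems(2)
  obtain e where e: "e \<in> E" using tgD(4)[OF tg] by blast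
  have ae: "arc e" using tgD(5)[OF tg e] .
  have a: "pathstart e \<in> ends e" by (simp add: ends_def)
  then have "pathstart e \<in> graph_vertices E" using e unfolding graph_vertices_def by blast
  then have "graph_degree E (pathstart e) = 2" using deg by blast
  then obtain e' where e': "e' \<in> E" "e' \<noteq> e" "{f\<in>E. pathstart e \<in> ends f} = {e, e'}"
    using degree2_set[OF tg e a] by blast
  show ?case
  proof (cases "ends e' = ends e")
    case True
    then show ?thesis using two_cycle[OF tg deg e e'(1,2)] by blast
  next
    case False
    obtain E' where E': "topological_graph X E'" "\<forall>v\<in>graph_vertices E'. graph_degree E' v = 2" "card E' < card E"
      using merge_step[OF tg deg e e'(1,2) e'(3) False] by blast
    then show ?thesis using less.hyps by blast
  qed
qed

theorem theorem5p8:
  fixes X :: "'a::metric_space set" and E :: "(real \<Rightarrow> 'a) set"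
  assumes "topological_graph X E"
  shows "(X homeomorphic sphere (0::complex) 1 \<longleftrightarrow> P_h X = range enat \<union> {\<infinity>})
       \<and> (P_h X = range enat \<union> {\<infinity>} \<longleftrightarrow> 0 \<in> P_h X)
       \<and> (0 \<in> P_h X \<longleftrightarrow> (\<forall>v\<in>graph_vertices E. graph_degree E v = 2))"
proof -
  have i12: "X homeomorphic sphere (0::complex) 1 \<Longrightarrow> P_h X = range enat \<union> {\<infinity>}"
    by (rule P_h_circle)
  have i23: "P_h X = range enat \<union> {\<infinity>} \<Longrightarrow> 0 \<in> P_h X"
    by (simp add: zero_enat_def)
  have i34: "0 \<in> P_h X \<Longrightarrow> (\<forall>v\<in>graph_vertices E. graph_degree E v = 2)"
    by (rule three_four[OF assms])
  have i41: "(\<forall>v\<in>graph_vertices E. graph_degree E v = 2) \<Longrightarrow> X homeomorphic sphere (0::complex) 1"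
    by (rule four_one[OF assms])
  show ?thesis using i12 i23 i34 i41 by blast
qed

end
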